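(* For every $n\geq1$, the triple of statistics $(\mathrm{last},\mathrm{zero},\mathrm{rmin})$ has the same joint distribution over $\mathbf{I}_n(\underline{12}0)$ as over $\mathbf{I}_n(110)$.
   Context: An inversion sequence of length $n$ is $e=e_1\ldots e_n$ with $0\le e_i<i$; $\mathbf{I}_n$ is their set. $\mathbf{I}_n(\underline{12}0)$ is the set of $e\in\mathbf{I}_n$ with no indices $2\le i<j\le n$ such that $e_j<e_{i-1}<e_i$. $\mathbf{I}_n(110)$ is the set of $e\in\mathbf{I}_n$ with no indices $i<j<k$ such that $e_i=e_j>e_k$. For $e\in\mathbf{I}_n$: $\mathrm{last}(e)=e_n$; $\mathrm{zero}(e)$ is the number of entries equal to $0$; $\mathrm{rmin}(e)$ is the number of right-to-left minima of $e$, i.e. indices $i$ with $e_i<e_j$ for all $j>i$. *)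

theory Defs
  imports Main
begin

text \<open>Inversion sequences as lists; the paper's entry e_i (1-based) is e ! (i - 1).\<close>

definition inv_seqs :: "nat \<Rightarrow> nat list set" where
  "inv_seqs n = {e. length e = n \<and> (\<forall>i<n. e ! i < Suc i)}"

text \<open>Pattern underlined 120: no 2 \<le> i < j \<le> n with e_j < e_(i-1) < e_i (1-based).\<close>
definition avoids_vinc120 :: "nat list \<Rightarrow> bool" where
  "avoids_vinc120 e = (\<not> (\<exists>i j. 2 \<le> i \<and> i < j \<and> j \<le> length e \<and>
      e ! (j - 1) < e ! (i - 2) \<and> e ! (i - 2) < e ! (i - 1)))"

definition avoids_110 :: "nat list \<Rightarrow> bool" where
  "avoids_110 e = (\<not> (\<exists>i j k. i < j \<and> j < k \<and> k < length e \<and>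
      e ! i = e ! j \<and> e ! j > e ! k))"

definition I_vinc120 :: "nat \<Rightarrow> nat list set" where
  "I_vinc120 n = {e \<in> inv_seqs n. avoids_vinc120 e}"

definition I_110 :: "nat \<Rightarrow> nat list set" where
  "I_110 n = {e \<in> inv_seqs n. avoids_110 e}"

definition last_stat :: "nat list \<Rightarrow> nat" where
  "last_stat e = last e"

definition zero_stat :: "nat list \<Rightarrow> nat" where
  "zero_stat e = card {i. i < length e \<and> e ! i = 0}"

definition rmin_stat :: "nat list \<Rightarrow> nat" where
  "rmin_stat e = card {i. i < length e \<and> (\<forall>j. i < j \<and> j < length e \<longrightarrow> e ! i < e ! j)}"

end

theory Submission
  imports Defs
begin


definition bnd :: "nat \<Rightarrow> nat list \<Rightarrow> bool" where
  "bnd k xs \<longleftrightarrow> (\<forall>i<length xs. xs!i \<le> k + i)"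

lemma inv_seqs_alt: "inv_seqs n = {e. length e = n \<and> bnd 0 e}"
  unfolding inv_seqs_def bnd_def by (auto simp: less_Suc_eq_le)

lemma bnd_Nil[simp]: "bnd k []" by (simp add: bnd_def)

lemma bnd_append: "bnd k (xs @ ys) \<longleftrightarrow> bnd k xs \<and> bnd (k + length xs) ys"
  unfolding bnd_def
proof safe
  fix i assume h: "\<forall>i<length (xs @ ys). (xs @ ys) ! i \<le> k + i" and i: "i < length xs"
  then show "xs ! i \<le> k + i" using h[rule_format, of i] by (simp add: nth_append)
next
  fix i assume h: "\<forall>i<length (xs @ ys). (xs @ ys) ! i \<le> k + i" and i: "i < length ys"
  then show "ys ! i \<le> k + length xs + i" using h[rule_format, of "length xs + i"] by (simp add: nth_append)
next
  fix i assume h1: "\<forall>i<length xs. xs ! i \<le> k + i" and h2: "\<forall>i<length ys. ys ! i \<le> k + length xs + i"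
    and i: "i < length (xs @ ys)"
  show "(xs @ ys) ! i \<le> k + i"
  proof (cases "i < length xs")
    case True then show ?thesis using h1 by (simp add: nth_append)
  next
    case False then show ?thesis using h2[rule_format, of "i - length xs"] i by (simp add: nth_append)
  qed
qed

lemma bnd_Cons: "bnd k (x # xs) \<longleftrightarrow> x \<le> k \<and> bnd (Suc k) xs"
  using bnd_append[of k "[x]" xs] by (simp add: bnd_def)

lemma bnd_mono: "bnd k xs \<Longrightarrow> k \<le> k' \<Longrightarrow> bnd k' xs"
  unfolding bnd_def by force

definition av120 :: "nat list \<Rightarrow> bool" where
  "av120 xs \<longleftrightarrow> (\<forall>a q. Suc a < q \<longrightarrow> q < length xs \<longrightarrow> xs!a < xs!(Suc a) \<longrightarrow> xs!a \<le> xs!q)"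

lemma av120_iff: "avoids_vinc120 e \<longleftrightarrow> av120 e"
  unfolding avoids_vinc120_def av120_def
proof safe
  fix a q assume h: "\<not> (\<exists>i j. 2 \<le> i \<and> i < j \<and> j \<le> length e \<and> e ! (j - 1) < e ! (i - 2) \<and> e ! (i - 2) < e ! (i - 1))"
    and aq: "Suc a < q" "q < length e" "e ! a < e ! Suc a"
  show "e ! a \<le> e ! q"
  proof (rule ccontr)
    assume "\<not> e ! a \<le> e ! q"
    then have "2 \<le> a + 2 \<and> a + 2 < q + 1 \<and> q + 1 \<le> length e \<and> e ! (q + 1 - 1) < e ! (a + 2 - 2) \<and> e ! (a + 2 - 2) < e ! (a + 2 - 1)"
      using aq by auto
    then show False using h by blast
  qed
next
  fix i j assume h: "\<forall>a q. Suc a < q \<longrightarrow> q < length e \<longrightarrow> e ! a < e ! Suc a \<longrightarrow> e ! a \<le> e ! q"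
    and ij: "2 \<le> i" "i < j" "j \<le> length e" "e ! (j - 1) < e ! (i - 2)" "e ! (i - 2) < e ! (i - 1)"
  have "Suc (i - 2) < j - 1" "j - 1 < length e" "e ! (i-2) < e ! Suc (i-2)" using ij
    by (auto simp: Suc_diff_Suc numeral_2_eq_2)
  then have "e ! (i-2) \<le> e ! (j-1)" using h by blast
  then show False using ij by simp
qed

definition av110 :: "nat list \<Rightarrow> bool" where
  "av110 xs \<longleftrightarrow> (\<forall>i j k. i < j \<longrightarrow> j < k \<longrightarrow> k < length xs \<longrightarrow> xs!i = xs!j \<longrightarrow> xs!j \<le> xs!k)"

lemma av110_iff: "avoids_110 e \<longleftrightarrow> av110 e"
  unfolding avoids_110_def av110_def by (meson not_le)

definition zc :: "nat list \<Rightarrow> nat" where "zc xs = length (filter (\<lambda>x. x = 0) xs)"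

lemma zero_stat_zc: "zero_stat e = zc e"
  unfolding zero_stat_def zc_def by (simp add: length_filter_conv_card)

lemma zc_simps[simp]: "zc [] = 0" "zc (x # xs) = (if x = 0 then Suc (zc xs) else zc xs)"
  "zc (xs @ ys) = zc xs + zc ys"
  by (auto simp: zc_def)

definition rm :: "nat list \<Rightarrow> nat" where "rm xs = rmin_stat xs"

lemma rm_Nil[simp]: "rm [] = 0"
  by (simp add: rm_def rmin_stat_def)

lemma rm_Cons: "rm (x # xs) = rm xs + (if \<forall>y\<in>set xs. x < y then 1 else 0)"
proof -
  let ?S = "\<lambda>xs. {i. i < length xs \<and> (\<forall>j. i < j \<and> j < length xs \<longrightarrow> xs ! i < xs ! j)}"
  have eq: "?S (x # xs) = (if \<forall>y\<in>set xs. x < y then {0} else {}) \<union> Suc ` ?S xs"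
  proof (rule set_eqI)
    fix i show "i \<in> ?S (x # xs) \<longleftrightarrow> i \<in> (if \<forall>y\<in>set xs. x < y then {0} else {}) \<union> Suc ` ?S xs"
    proof (cases i)
      case 0
      have "(\<forall>j. 0 < j \<and> j < Suc (length xs) \<longrightarrow> x < (x#xs) ! j) \<longleftrightarrow> (\<forall>y\<in>set xs. x < y)"
      proof
        assume H: "\<forall>j. 0 < j \<and> j < Suc (length xs) \<longrightarrow> x < (x#xs) ! j"
        show "\<forall>y\<in>set xs. x < y"
        proof
          fix y assume "y \<in> set xs"
          then obtain k where "k < length xs" "y = xs ! k" by (auto simp: in_set_conv_nth)
          then show "x < y" using H[rule_format, of "Suc k"] by simp
        qed
      next
        assume H: "\<forall>y\<in>set xs. x < y"
        show "\<forall>j. 0 < j \<and> j < Suc (length xs) \<longrightarrow> x < (x#xs) ! j"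
        proof (intro allI impI)
          fix j assume "0 < j \<and> j < Suc (length xs)"
          then obtain k where "j = Suc k" "k < length xs" by (cases j) auto
          then show "x < (x#xs) ! j" using H by simp
        qed
      qed
      then show ?thesis using 0 by auto
    next
      case (Suc i')
      have "(\<forall>j. Suc i' < j \<and> j < Suc (length xs) \<longrightarrow> xs ! i' < (x#xs) ! j) \<longleftrightarrow> (\<forall>j. i' < j \<and> j < length xs \<longrightarrow> xs ! i' < xs ! j)"
      proof
        assume H: "\<forall>j. Suc i' < j \<and> j < Suc (length xs) \<longrightarrow> xs ! i' < (x#xs) ! j"
        show "\<forall>j. i' < j \<and> j < length xs \<longrightarrow> xs ! i' < xs ! j"
        proof (intro allI impI)
          fix j assume "i' < j \<and> j < length xs"
          then show "xs ! i' < xs ! j" using H[rule_format, of "Suc j"] by simp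
        qed
      next
        assume H: "\<forall>j. i' < j \<and> j < length xs \<longrightarrow> xs ! i' < xs ! j"
        show "\<forall>j. Suc i' < j \<and> j < Suc (length xs) \<longrightarrow> xs ! i' < (x#xs) ! j"
        proof (intro allI impI)
          fix j assume a: "Suc i' < j \<and> j < Suc (length xs)"
          then obtain k where "j = Suc k" by (cases j) auto
          then show "xs ! i' < (x#xs) ! j" using H a by simp
        qed
      qed
      then show ?thesis using Suc by auto
    qed
  qed
  have fin: "finite (?S xs)" by auto
  show ?thesis unfolding rm_def rmin_stat_def eq
    by (simp add: card_image fin card_insert_if)
qed

lemma rm_append: "a \<noteq> [] \<Longrightarrow> \<forall>y\<in>set b. last a < y \<Longrightarrow> rm (a @ b) = rm a + rm b"
proof (induction a)
  case Nil then show ?case by simp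
next
  case (Cons x a)
  show ?case
  proof (cases "a = []")
    case True
    then show ?thesis using Cons.prems by (simp add: rm_Cons)
  next
    case False
    have l: "last (x # a) = last a" using False by simp
    have "(\<forall>y\<in>set (a @ b). x < y) \<longleftrightarrow> (\<forall>y\<in>set a. x < y)"
      using Cons.prems False l by (auto, meson last_in_set order.strict_trans)
    then show ?thesis using Cons False by (simp add: rm_Cons)
  qed
qed

lemma rm_last_min: "xs \<noteq> [] \<Longrightarrow> \<forall>y\<in>set xs. last xs \<le> y \<Longrightarrow> rm xs = 1"
proof (induction xs)
  case Nil then show ?case by simp
next
  case (Cons x xs)
  show ?case
  proof (cases "xs = []")
    case True then show ?thesis by (simp add: rm_Cons)
  next
    case False
    then have "\<not> (\<forall>y\<in>set xs. x < y)" using Cons.prems by (auto, meson last_in_set not_le)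
    then show ?thesis using Cons False by (simp add: rm_Cons)
  qed
qed

lemma rm_last0: "xs \<noteq> [] \<Longrightarrow> last xs = 0 \<Longrightarrow> rm xs = 1"
  by (rule rm_last_min) auto

lemma rm_last1: "0 \<in> set xs \<Longrightarrow> last xs = 1 \<Longrightarrow> rm xs = 2"
proof (induction xs)
  case Nil then show ?case by simp
next
  case (Cons x xs)
  show ?case
  proof (cases "0 \<in> set xs")
    case True
    then have ne: "xs \<noteq> []" by auto
    then have "last xs = 1" using Cons.prems by simp
    then have "rm xs = 2" using Cons.IH True by simp
    moreover have "\<not> (\<forall>y\<in>set xs. x < y)" using True by auto
    ultimately show ?thesis by (simp add: rm_Cons)
  next
    case False
    then have x0: "x = 0" using Cons.prems by auto
    have ne: "xs \<noteq> []" using Cons.prems x0 by auto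
    have "\<forall>y\<in>set xs. 1 \<le> y" using False by (metis One_nat_def Suc_leI neq0_conv)
    then have "rm xs = 1" using ne Cons.prems by (intro rm_last_min) auto
    moreover have "\<forall>y\<in>set xs. x < y"
    proof
      fix y assume "y \<in> set xs"
      have "y \<noteq> 0"
      proof
        assume "y = 0"
        then show False using \<open>y \<in> set xs\<close> False by simp
      qed
      then show "x < y" using x0 by simp
    qed
    ultimately show ?thesis by (simp add: rm_Cons)
  qed
qed

definition stats :: "nat list \<Rightarrow> nat \<times> nat \<times> nat" where
  "stats e = (last e, zc e, rm e)"



definition I120 :: "nat \<Rightarrow> nat list set" where "I120 n = {e \<in> inv_seqs n. av120 e}"
definition I110 :: "nat \<Rightarrow> nat list set" where "I110 n = {e \<in> inv_seqs n. av110 e}"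

lemma finite_inv_seqs: "finite (inv_seqs n)"
proof -
  have "inv_seqs n \<subseteq> {xs. set xs \<subseteq> {0..<n} \<and> length xs = n}"
    unfolding inv_seqs_def by (auto simp: in_set_conv_nth) (metis less_Suc_eq_le less_le_trans not_less)
  moreover have "finite {xs. set xs \<subseteq> {0..<n} \<and> length xs = n}"
    by (rule finite_lists_length_eq) simp
  ultimately show ?thesis by (rule finite_subset)
qed

lemma finite_I120: "finite (I120 n)" unfolding I120_def using finite_inv_seqs by simp
lemma finite_I110: "finite (I110 n)" unfolding I110_def using finite_inv_seqs by simp

definition up :: "nat \<Rightarrow> nat" where "up l = (if l = 0 then 0 else Suc l)"

definition P1 :: "nat \<Rightarrow> nat \<Rightarrow> nat \<Rightarrow> nat \<times> nat \<times> nat \<Rightarrow> bool" where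
  "P1 l z r s = (case s of (a, b, c) \<Rightarrow> up a = l \<and> c = r \<and> Suc b = z)"
definition P2 :: "nat \<Rightarrow> nat \<Rightarrow> nat \<Rightarrow> nat \<times> nat \<times> nat \<Rightarrow> bool" where
  "P2 l z r s = (case s of (a, b, c) \<Rightarrow> up a = l \<and> c = r \<and> b = z)"
definition P3 :: "nat \<Rightarrow> nat \<Rightarrow> nat \<Rightarrow> nat \<times> nat \<times> nat \<Rightarrow> bool" where
  "P3 l z r s = (case s of (a, b, c) \<Rightarrow> Suc a = l \<and> Suc c = r \<and> b = z)"
definition P4 :: "nat \<Rightarrow> nat \<Rightarrow> nat \<Rightarrow> nat \<times> nat \<times> nat \<Rightarrow> bool" where
  "P4 l z r s = (case s of (a, b, c) \<Rightarrow> Suc a = l \<and> Suc c = r \<and> z < b)"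

definition REC :: "(nat \<Rightarrow> nat list set) \<Rightarrow> bool" where
  "REC X \<longleftrightarrow> (\<forall>n\<ge>1. \<forall>l z r. card {f \<in> X (Suc n). stats f = (l, z, r)} =
       card {e \<in> X n. P1 l z r (stats e)} + (z - 1) * card {e \<in> X n. P2 l z r (stats e)}
     + card {e \<in> X n. P3 l z r (stats e)} + z * card {e \<in> X n. P4 l z r (stats e)})"

lemma card_pred_eq:
  fixes A B :: "'a set" and f :: "'a \<Rightarrow> 'b"
  assumes fA: "finite A" and fB: "finite B"
    and eq: "\<And>s. card {e \<in> A. f e = s} = card {e \<in> B. f e = s}"
  shows "card {e \<in> A. P (f e)} = card {e \<in> B. P (f e)}"
proof -
  let ?S = "f ` (A \<union> B)"
  have fS: "finite ?S" using fA fB by simp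
  have gen: "card {e \<in> C. P (f e)} = (\<Sum>s\<in>?S. if P s then card {e \<in> C. f e = s} else 0)"
    if fC: "finite C" and sub: "C \<subseteq> A \<union> B" for C
  proof -
    have "card {e \<in> C. P (f e)} = (\<Sum>e\<in>C. if P (f e) then 1 else 0)"
    proof -
      have "{e \<in> C. P (f e)} = C \<inter> {e. P (f e)}" by auto
      then show ?thesis using fC by (simp add: sum.If_cases)
    qed
    also have "\<dots> = (\<Sum>s\<in>f ` C. \<Sum>e\<in>{e \<in> C. f e = s}. if P (f e) then 1 else 0)"
      using fC by (rule sum.image_gen)
    also have "\<dots> = (\<Sum>s\<in>f ` C. if P s then card {e \<in> C. f e = s} else 0)"
      by (rule sum.cong) (auto simp: sum.If_cases)
    also have "\<dots> = (\<Sum>s\<in>?S. if P s then card {e \<in> C. f e = s} else 0)"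
    proof (rule sum.mono_neutral_left)
      show "finite ?S" by (rule fS)
      show "f ` C \<subseteq> ?S" using sub by auto
      show "\<forall>i\<in>?S - f ` C. (if P i then card {e \<in> C. f e = i} else 0) = 0"
      proof
        fix i assume "i \<in> ?S - f ` C"
        then have E: "{e \<in> C. f e = i} = {}" by (auto simp: image_iff)
        show "(if P i then card {e \<in> C. f e = i} else 0) = 0" by (subst E) simp
      qed
    qed
    finally show ?thesis .
  qed
  show ?thesis unfolding gen[OF fA order.refl[THEN subset_trans, OF Un_upper1]] gen[OF fB Un_upper2] by (rule sum.cong[OF refl]) (simp only: eq)
qed

lemma I_one: "I120 (Suc 0) = {[0]}" "I110 (Suc 0) = {[0]}"
  unfolding I120_def I110_def inv_seqs_def av120_def av110_def
  by (auto simp: length_Suc_conv)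

theorem equi_from_REC:
  assumes "REC I120" "REC I110" "n \<ge> 1"
  shows "card {e \<in> I120 n. stats e = s} = card {e \<in> I110 n. stats e = s}"
  using assms(3)
proof (induction n arbitrary: s rule: dec_induct)
  case base
  then show ?case by (simp add: I_one)
next
  case (step n)
  have eqP: "card {e \<in> I120 n. P (stats e)} = card {e \<in> I110 n. P (stats e)}" for P
    by (rule card_pred_eq[OF finite_I120 finite_I110]) (rule step.IH)
  obtain l z r where s: "s = (l, z, r)" by (cases s) auto
  show ?case
    using assms(1,2) step.hyps unfolding REC_def s
    by (simp add: eqP)
qed

theorem main_from_REC:
  assumes "REC I120" "REC I110" "n \<ge> 1"
  shows "card {e \<in> I_vinc120 n. last_stat e = a \<and> zero_stat e = b \<and> rmin_stat e = c}
       = card {e \<in> I_110 n. last_stat e = a \<and> zero_stat e = b \<and> rmin_stat e = c}"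
proof -
  have 1: "{e \<in> I_vinc120 n. last_stat e = a \<and> zero_stat e = b \<and> rmin_stat e = c} = {e \<in> I120 n. stats e = (a, b, c)}"
    unfolding I_vinc120_def I120_def stats_def last_stat_def zero_stat_zc rm_def by (auto simp: av120_iff)
  have 2: "{e \<in> I_110 n. last_stat e = a \<and> zero_stat e = b \<and> rmin_stat e = c} = {e \<in> I110 n. stats e = (a, b, c)}"
    unfolding I_110_def I110_def stats_def last_stat_def zero_stat_zc rm_def by (auto simp: av110_iff)
  show ?thesis unfolding 1 2 by (rule equi_from_REC[OF assms])
qed



lemma card_split_bij:
  assumes "\<And>xs. xs \<in> S \<Longrightarrow> (take j xs, drop j xs) \<in> T"
    and "\<And>a b. (a, b) \<in> T \<Longrightarrow> a @ b \<in> S \<and> length a = j"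
  shows "card S = card T"
proof -
  have "bij_betw (\<lambda>xs. (take j xs, drop j xs)) S T"
  proof (rule bij_betw_byWitness[where f' = "\<lambda>(a, b). a @ b"])
    show "\<forall>a\<in>S. (case (take j a, drop j a) of (a, b) \<Rightarrow> a @ b) = a" by simp
    show "\<forall>a'\<in>T. (take j (case a' of (a, b) \<Rightarrow> a @ b), drop j (case a' of (a, b) \<Rightarrow> a @ b)) = a'"
      using assms(2) by auto
    show "(\<lambda>xs. (take j xs, drop j xs)) ` S \<subseteq> T" using assms(1) by auto
    show "(\<lambda>(a, b). a @ b) ` T \<subseteq> S" using assms(2) by auto
  qed
  then show ?thesis by (rule bij_betw_same_card)
qed

lemma card_partition:
  assumes "finite S" "\<And>x. x \<in> S \<Longrightarrow> sp x \<in> J" "finite J"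
  shows "card S = (\<Sum>j\<in>J. card {x\<in>S. sp x = j})"
proof -
  have "S = (\<Union>j\<in>J. {x\<in>S. sp x = j})" using assms(2) by auto
  then have "card S = card (\<Union>j\<in>J. {x\<in>S. sp x = j})" by simp
  also have "\<dots> = (\<Sum>j\<in>J. card {x\<in>S. sp x = j})"
    by (rule card_UN_disjoint) (use assms in auto)
  finally show ?thesis .
qed

lemma card_Pair_filter:
  "card {(a, b) \<in> A \<times> B. X a \<and> Y b} = card {a\<in>A. X a} * card {b\<in>B. Y b}"
proof -
  have "{(a, b) \<in> A \<times> B. X a \<and> Y b} = {a\<in>A. X a} \<times> {b\<in>B. Y b}" by auto
  then show ?thesis by (simp add: card_cartesian_product)
qed

definition cZ :: "(nat \<Rightarrow> bool) \<Rightarrow> nat list \<Rightarrow> nat" where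
  "cZ Z xs = length (filter Z xs)"

lemma cZ_simps[simp]: "cZ Z [] = 0" "cZ Z (x # xs) = (if Z x then Suc (cZ Z xs) else cZ Z xs)"
  "cZ Z (xs @ ys) = cZ Z xs + cZ Z ys"
  by (auto simp: cZ_def)

lemma cZ_take_mono: "j \<le> j' \<Longrightarrow> cZ Z (take j xs) \<le> cZ Z (take j' xs)"
proof -
  assume "j \<le> j'"
  then have "take j' xs = take j xs @ take (j' - j) (drop j xs)"
    by (metis le_add_diff_inverse take_add)
  then show ?thesis by simp
qed

lemma cZ_take_Suc: "j < length xs \<Longrightarrow> cZ Z (take (Suc j) xs) = cZ Z (take j xs) + (if Z (xs!j) then 1 else 0)"
  by (simp add: take_Suc_conv_app_nth)

lemma zpos_exists: "K < cZ Z xs \<Longrightarrow> \<exists>j<length xs. Z (xs!j) \<and> cZ Z (take j xs) = K"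
proof (induction xs arbitrary: K)
  case Nil then show ?case by simp
next
  case (Cons y ys)
  show ?case
  proof (cases "Z y")
    case True
    show ?thesis
    proof (cases K)
      case 0 then show ?thesis using True by (intro exI[of _ 0]) simp
    next
      case (Suc K')
      then have "K' < cZ Z ys" using Cons.prems True by simp
      then obtain j where "j < length ys" "Z (ys!j)" "cZ Z (take j ys) = K'" using Cons.IH by blast
      then show ?thesis using True Suc by (intro exI[of _ "Suc j"]) simp
    qed
  next
    case False
    then have "K < cZ Z ys" using Cons.prems by simp
    then obtain j where "j < length ys" "Z (ys!j)" "cZ Z (take j ys) = K" using Cons.IH by blast
    then show ?thesis using False by (intro exI[of _ "Suc j"]) simp
  qed
qed

lemma zpos_unique_aux:
  assumes "j1 < j2" "j2 < length xs" "Z (xs!j1)"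
  shows "cZ Z (take j1 xs) < cZ Z (take j2 xs)"
proof -
  have "cZ Z (take (Suc j1) xs) = Suc (cZ Z (take j1 xs))"
    using assms cZ_take_Suc[of j1 xs Z] by simp
  moreover have "cZ Z (take (Suc j1) xs) \<le> cZ Z (take j2 xs)"
    using assms by (intro cZ_take_mono) simp
  ultimately show ?thesis by simp
qed

lemma zpos_unique:
  assumes "j1 < length xs" "Z (xs!j1)" "cZ Z (take j1 xs) = K"
    and "j2 < length xs" "Z (xs!j2)" "cZ Z (take j2 xs) = K"
  shows "j1 = j2"
  using zpos_unique_aux[of j1 j2 xs Z] zpos_unique_aux[of j2 j1 xs Z] assms
  by (metis less_irrefl nat_neq_iff)

definition zpos :: "(nat \<Rightarrow> bool) \<Rightarrow> nat \<Rightarrow> nat list \<Rightarrow> nat" where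
  "zpos Z K xs = (LEAST j. j < length xs \<and> Z (xs!j) \<and> cZ Z (take j xs) = K)"

lemma zpos_props:
  assumes "K < cZ Z xs"
  shows "zpos Z K xs < length xs" "Z (xs ! zpos Z K xs)" "cZ Z (take (zpos Z K xs) xs) = K"
proof -
  obtain j where "j < length xs \<and> Z (xs!j) \<and> cZ Z (take j xs) = K" using zpos_exists[OF assms] by blast
  then have "zpos Z K xs < length xs \<and> Z (xs ! zpos Z K xs) \<and> cZ Z (take (zpos Z K xs) xs) = K"
    unfolding zpos_def by (rule LeastI)
  then show "zpos Z K xs < length xs" "Z (xs ! zpos Z K xs)" "cZ Z (take (zpos Z K xs) xs) = K" by auto
qed

lemma cZ_take_le: "cZ Z (take j xs) \<le> cZ Z xs"
  by (metis append_take_drop_id cZ_simps(3) le_add1)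

lemma zpos_eq:
  assumes "j < length xs" "Z (xs!j)" "cZ Z (take j xs) = K"
  shows "zpos Z K xs = j"
proof -
  have "cZ Z (take (Suc j) xs) = Suc K" using assms cZ_take_Suc[of j xs Z] by simp
  then have "K < cZ Z xs" using cZ_take_le[of Z "Suc j" xs] by simp
  then show ?thesis using zpos_props[of K Z xs] assms zpos_unique by blast
qed

lemma zpos_append: "Z x \<Longrightarrow> cZ Z a = K \<Longrightarrow> zpos Z K (a @ x # b) = length a"
  by (rule zpos_eq) (auto simp: nth_append)

definition asc_ok :: "(nat \<Rightarrow> bool) \<Rightarrow> nat list \<Rightarrow> bool" where
  "asc_ok P xs \<longleftrightarrow> (\<forall>a. Suc a < length xs \<longrightarrow> xs!a < xs!(Suc a) \<longrightarrow> P (xs!a))"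

lemma asc_ok_Nil[simp]: "asc_ok P []" by (simp add: asc_ok_def)
lemma asc_ok_single[simp]: "asc_ok P [x]" by (simp add: asc_ok_def)

lemma asc_ok_append:
  "asc_ok P (a @ b) \<longleftrightarrow> asc_ok P a \<and> asc_ok P b \<and> (a \<noteq> [] \<and> b \<noteq> [] \<and> last a < hd b \<longrightarrow> P (last a))"
proof
  assume h: "asc_ok P (a @ b)"
  have 1: "asc_ok P a" unfolding asc_ok_def
  proof (intro allI impI)
    fix i assume "Suc i < length a" "a ! i < a ! Suc i"
    then show "P (a ! i)" using h[unfolded asc_ok_def, rule_format, of i] by (simp add: nth_append)
  qed
  have 2: "asc_ok P b" unfolding asc_ok_def
  proof (intro allI impI)
    fix i assume "Suc i < length b" "b ! i < b ! Suc i"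
    then show "P (b ! i)" using h[unfolded asc_ok_def, rule_format, of "length a + i"] by (simp add: nth_append)
  qed
  have 3: "a \<noteq> [] \<and> b \<noteq> [] \<and> last a < hd b \<longrightarrow> P (last a)"
  proof
    assume A: "a \<noteq> [] \<and> b \<noteq> [] \<and> last a < hd b"
    then have lt: "a ! (length a - 1) < b ! 0" by (metis last_conv_nth hd_conv_nth)
    have "P ((a @ b) ! (length a - 1))"
      using h[unfolded asc_ok_def, rule_format, of "length a - 1"] A lt by (simp add: nth_append)
    then show "P (last a)" using A by (simp add: nth_append last_conv_nth)
  qed
  show "asc_ok P a \<and> asc_ok P b \<and> (a \<noteq> [] \<and> b \<noteq> [] \<and> last a < hd b \<longrightarrow> P (last a))"
    using 1 2 3 by blast
next
  assume H: "asc_ok P a \<and> asc_ok P b \<and> (a \<noteq> [] \<and> b \<noteq> [] \<and> last a < hd b \<longrightarrow> P (last a))"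
  then have ha: "asc_ok P a" and hb: "asc_ok P b" and hab: "a \<noteq> [] \<and> b \<noteq> [] \<and> last a < hd b \<longrightarrow> P (last a)"
    by auto
  show "asc_ok P (a @ b)" unfolding asc_ok_def
  proof (intro allI impI)
    fix i assume i: "Suc i < length (a @ b)" "(a @ b) ! i < (a @ b) ! Suc i"
    consider "Suc i < length a" | "Suc i = length a" | "length a \<le> i" by linarith
    then show "P ((a @ b) ! i)"
    proof cases
      case 1 then show ?thesis using ha i unfolding asc_ok_def by (simp add: nth_append)
    next
      case 2
      then have "a \<noteq> []" "b \<noteq> []" using i by auto
      moreover have "(a @ b) ! i = last a"
      proof -
        have "i = length a - 1" "i < length a" using 2 by auto
        then show ?thesis using \<open>a \<noteq> []\<close> by (simp add: nth_append last_conv_nth)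
      qed
      moreover have "(a @ b) ! Suc i = hd b" using 2 \<open>b \<noteq> []\<close> by (simp add: nth_append hd_conv_nth)
      ultimately show ?thesis using hab i by auto
    next
      case 3
      then have "Suc (i - length a) < length b" "b ! (i - length a) < b ! Suc (i - length a)"
        using i by (auto simp: nth_append Suc_diff_le)
      then show ?thesis using hb 3 unfolding asc_ok_def by (simp add: nth_append)
    qed
  qed
qed

lemma asc_ok_Cons: "asc_ok P (x # xs) \<longleftrightarrow> asc_ok P xs \<and> (xs \<noteq> [] \<and> x < hd xs \<longrightarrow> P x)"
  using asc_ok_append[of P "[x]" xs] by simp

lemma asc_ok_mono: "asc_ok P xs \<Longrightarrow> (\<And>x. P x \<Longrightarrow> Q x) \<Longrightarrow> asc_ok Q xs"
  unfolding asc_ok_def by blast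

lemma av120_take: "av120 xs \<Longrightarrow> av120 (take j xs)"
  unfolding av120_def by auto

lemma av120_drop: "av120 xs \<Longrightarrow> av120 (drop j xs)"
  unfolding av120_def
proof (intro allI impI)
  fix a q assume h: "\<forall>a q. Suc a < q \<longrightarrow> q < length xs \<longrightarrow> xs ! a < xs ! Suc a \<longrightarrow> xs ! a \<le> xs ! q"
    and aq: "Suc a < q" "q < length (drop j xs)" "drop j xs ! a < drop j xs ! Suc a"
  then show "drop j xs ! a \<le> drop j xs ! q" using h[rule_format, of "j + a" "j + q"] by simp
qed

lemma av120_glue:
  assumes "av120 a" "av120 b" "a \<noteq> []" "\<forall>y\<in>set b. last a < y"
  shows "av120 (a @ b)"
  unfolding av120_def
proof (intro allI impI)
  fix p q assume pq: "Suc p < q" "q < length (a @ b)" "(a @ b) ! p < (a @ b) ! Suc p"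
  have la: "last a = a ! (length a - 1)" using assms(3) by (simp add: last_conv_nth)
  consider "q < length a" | "Suc p < length a - 1" "length a \<le> q" | "Suc p = length a - 1" "length a \<le> q"
    | "p = length a - 1" | "length a \<le> p" using pq by linarith
  then show "(a @ b) ! p \<le> (a @ b) ! q"
  proof cases
    case 1 then show ?thesis using assms(1) pq unfolding av120_def by (simp add: nth_append)
  next
    case 2
    have bq: "(a @ b) ! q = b ! (q - length a)" "q - length a < length b" using 2 pq by (auto simp: nth_append)
    have "p < length a" "Suc p < length a" using 2 by auto
    then have asc: "a ! p < a ! Suc p" using pq by (simp add: nth_append)
    have "a ! p \<le> a ! (length a - 1)"
      using assms(1)[unfolded av120_def, rule_format, of p "length a - 1"] 2 asc assms(3) by simp
    moreover have "last a < b ! (q - length a)" using assms(4) bq by auto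
    ultimately show ?thesis using 2 bq la by (simp add: nth_append)
  next
    case 3
    have bq: "(a @ b) ! q = b ! (q - length a)" "q - length a < length b" using 3 pq by (auto simp: nth_append)
    have "p < length a" "Suc p < length a" using 3 pq by auto
    then have "a ! p < a ! Suc p" using pq by (simp add: nth_append)
    moreover have "a ! Suc p = last a" using 3 la by simp
    moreover have "last a < b ! (q - length a)" using assms(4) bq by auto
    ultimately show ?thesis using 3 bq by (simp add: nth_append)
  next
    case 4
    have bq: "(a @ b) ! q = b ! (q - length a)" "q - length a < length b" using 4 pq assms(3) by (auto simp: nth_append)
    have "(a @ b) ! p = last a" using 4 la assms(3) by (simp add: nth_append)
    then show ?thesis using assms(4) bq by (metis less_imp_le nth_mem)
  next
    case 5
    define p' where "p' = p - length a"
    define q' where "q' = q - length a"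
    have e: "p = length a + p'" "q = length a + q'" "Suc p = length a + Suc p'" using 5 pq by (auto simp: p'_def q'_def)
    have "Suc p' < q'" "q' < length b" using pq e by auto
    moreover have "b ! p' < b ! Suc p'" using pq e by (simp add: nth_append)
    ultimately have "b ! p' \<le> b ! q'" using assms(2) unfolding av120_def by blast
    then show ?thesis using e by (simp add: nth_append)
  qed
qed



lemma stirling_from_block:
  fixes W d :: "nat \<Rightarrow> nat \<Rightarrow> nat"
  assumes W0: "\<And>K. W 0 K = (if K = 0 then 1 else 0)"
    and Wk0: "\<And>k. W (Suc k) 0 = 0"
    and blk: "\<And>k K. W (Suc k) (Suc K) = (\<Sum>j\<le>k. W j K * d (Suc j) (k - j))"
    and d0: "\<And>p. d p 0 = 1" and d0S: "\<And>m. d 0 (Suc m) = 0"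
    and dSS: "\<And>p m. d (Suc p) (Suc m) = d (Suc p) m + d p (Suc m)"
  shows "W (Suc k) (Suc K) = W k K + Suc K * W k (Suc K)"
proof (induction k arbitrary: K rule: less_induct)
  case (less k)
  show ?case
  proof (cases k)
    case 0
    then show ?thesis using blk[of 0 K] W0 d0 by simp
  next
    case (Suc k')
    have split: "(\<Sum>j\<le>Suc k'. W j K * d (Suc j) (Suc k' - j))
        = W (Suc k') K + (\<Sum>j\<le>k'. W j K * d (Suc j) (Suc (k' - j)))"
      by (simp add: d0 Suc_diff_le add.commute)
    have pas: "(\<Sum>j\<le>k'. W j K * d (Suc j) (Suc (k' - j)))
        = (\<Sum>j\<le>k'. W j K * d (Suc j) (k' - j)) + (\<Sum>j\<le>k'. W j K * d j (Suc (k' - j)))"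
      by (simp add: dSS algebra_simps sum.distrib)
    have third: "(\<Sum>j\<le>k'. W j K * d j (Suc (k' - j))) = (\<Sum>j<k'. W (Suc j) K * d (Suc j) (k' - j))"
    proof -
      have "(\<Sum>j\<le>k'. W j K * d j (Suc (k' - j))) = W 0 K * d 0 (Suc k') + (\<Sum>j<k'. W (Suc j) K * d (Suc j) (Suc (k' - Suc j)))"
        by (simp add: sum.atMost_shift lessThan_Suc_atMost)
      also have "\<dots> = (\<Sum>j<k'. W (Suc j) K * d (Suc j) (k' - j))"
        by (simp add: d0S Suc_diff_Suc)
      finally show ?thesis .
    qed
    have main: "W (Suc k) (Suc K) = W k K + W k (Suc K) + (\<Sum>j<k'. W (Suc j) K * d (Suc j) (k' - j))"
      using blk[of k K] blk[of k' K] Suc split pas third by simp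
    show ?thesis
    proof (cases K)
      case 0
      then show ?thesis using main Wk0 by simp
    next
      case (Suc K')
      have IHj: "W (Suc j) K = W j K' + K * W j K" if "j < k'" for j
        using less.IH[of j K'] that Suc \<open>k = Suc k'\<close> by simp
      have s1: "(\<Sum>j<k'. W (Suc j) K * d (Suc j) (k' - j))
          = (\<Sum>j<k'. W j K' * d (Suc j) (k' - j)) + K * (\<Sum>j<k'. W j K * d (Suc j) (k' - j))"
        by (simp add: IHj algebra_simps sum.distrib sum_distrib_left)
      have X: "W k K = (\<Sum>j<k'. W j K' * d (Suc j) (k' - j)) + W k' K'"
        using blk[of k' K'] Suc \<open>k = Suc k'\<close> by (simp add: lessThan_Suc_atMost[symmetric] d0)
      have Y: "W k (Suc K) = (\<Sum>j<k'. W j K * d (Suc j) (k' - j)) + W k' K"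
        using blk[of k' K] Suc \<open>k = Suc k'\<close> by (simp add: lessThan_Suc_atMost[symmetric] d0)
      have IHk: "W k K = W k' K' + K * W k' K"
        using less.IH[of k' K'] Suc \<open>k = Suc k'\<close> by simp
      have "(\<Sum>j<k'. W j K' * d (Suc j) (k' - j)) = K * W k' K" using X IHk by simp
      then show ?thesis using main s1 Y by (simp add: algebra_simps)
    qed
  qed
qed

lemma H_from_parts:
  fixes W Wge H c :: "nat \<Rightarrow> nat \<Rightarrow> nat"
  assumes W0: "\<And>K. W 0 K = (if K = 0 then 1 else 0)"
    and Wk0: "\<And>k. W (Suc k) 0 = 0"
    and stir: "\<And>k K. W (Suc k) (Suc K) = W k K + Suc K * W k (Suc K)"
    and D1: "\<And>k K. H (Suc k) (Suc K) = (\<Sum>j\<le>k. W j K * c j (k - j))"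
    and D2: "\<And>N K. Wge N (Suc K) = (\<Sum>j<N. W j K * c (Suc j) (N - Suc j))"
    and D3: "\<And>N K. Wge N K = W N K + Wge N (Suc K)"
    and D4: "\<And>N. c 0 N = Wge N 0"
  shows "H (Suc k) (Suc K) = W k K + Suc K * Wge k (Suc K)"
proof -
  have "H (Suc k) (Suc K) = W 0 K * c 0 k + (\<Sum>j<k. W (Suc j) K * c (Suc j) (k - Suc j))"
    unfolding D1 by (simp add: sum.atMost_shift)
  also have "\<dots> = W k K + Suc K * Wge k (Suc K)"
  proof (cases K)
    case 0
    then show ?thesis using W0 Wk0 D4 D3[of k 0] by simp
  next
    case (Suc K')
    have "(\<Sum>j<k. W (Suc j) K * c (Suc j) (k - Suc j))
        = (\<Sum>j<k. W j K' * c (Suc j) (k - Suc j)) + K * (\<Sum>j<k. W j K * c (Suc j) (k - Suc j))"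
      by (simp add: Suc stir algebra_simps sum.distrib sum_distrib_left)
    also have "\<dots> = Wge k K + K * Wge k (Suc K)" using D2[of k K'] D2[of k K] Suc by simp
    finally show ?thesis using W0 Suc D3[of k K] by (simp add: algebra_simps)
  qed
  finally show ?thesis .
qed



definition Cset :: "nat \<Rightarrow> nat \<Rightarrow> nat list set" where
  "Cset p m = {P. length P = m \<and> bnd p P \<and> asc_ok (\<lambda>x. x = 0) P}"

lemma finite_bnd: "finite {P. length P = m \<and> bnd p P}"
proof -
  have "{P. length P = m \<and> bnd p P} \<subseteq> {P. set P \<subseteq> {0..p+m} \<and> length P = m}"
  proof safe
    fix P x assume "bnd p P" "x \<in> set P"
    then obtain i where "i < length P" "P ! i = x" by (auto simp: in_set_conv_nth)
    then have "x \<le> p + i" using \<open>bnd p P\<close> unfolding bnd_def by auto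
    then show "x \<in> {0..p + length P}" using \<open>i < length P\<close> by simp
  qed
  moreover have "finite {P. set P \<subseteq> {0..p+m} \<and> length P = m}"
    by (rule finite_lists_length_eq) simp
  ultimately show ?thesis by (rule finite_subset)
qed

lemma finite_Cset: "finite (Cset p m)"
  by (rule finite_subset[OF _ finite_bnd[of m p]]) (auto simp: Cset_def)

lemma zc_cZ: "zc xs = cZ (\<lambda>x. x = 0) xs"
  by (simp add: zc_def cZ_def)

lemma Cset_zero_split:
  "u @ 0 # v \<in> Cset p N \<longleftrightarrow> N = length u + Suc (length v) \<and> u \<in> Cset p (length u) \<and> v \<in> Cset (Suc (p + length u)) (length v)"
proof -
  have b: "bnd p (u @ 0 # v) \<longleftrightarrow> bnd p u \<and> bnd (Suc (p + length u)) v"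
    by (simp add: bnd_append bnd_Cons)
  have a: "asc_ok (\<lambda>x. x = 0) (u @ 0 # v) \<longleftrightarrow> asc_ok (\<lambda>x. x = 0) u \<and> asc_ok (\<lambda>x. x = 0) v"
    by (simp add: asc_ok_append asc_ok_Cons)
  show ?thesis unfolding Cset_def using a b by auto
qed

lemma bnd0_hd: "bnd 0 h \<Longrightarrow> h \<noteq> [] \<Longrightarrow> h ! 0 = 0"
  unfolding bnd_def by auto

lemma zc_pos: "bnd 0 h \<Longrightarrow> h \<noteq> [] \<Longrightarrow> 0 < zc h"
  by (cases h) (auto simp: bnd_Cons)

definition W :: "nat \<Rightarrow> nat \<Rightarrow> nat" where "W k K = card {h \<in> Cset 0 k. zc h = K}"
definition Wge :: "nat \<Rightarrow> nat \<Rightarrow> nat" where "Wge k K = card {h \<in> Cset 0 k. K \<le> zc h}"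
definition cc :: "nat \<Rightarrow> nat \<Rightarrow> nat" where "cc p m = card (Cset p m)"

definition Dset :: "nat \<Rightarrow> nat \<Rightarrow> nat list set" where
  "Dset p m = {D \<in> Cset p m. 0 \<notin> set D}"
definition dc :: "nat \<Rightarrow> nat \<Rightarrow> nat" where "dc p m = card (Dset p m)"

lemma W0: "W 0 K = (if K = 0 then 1 else 0)"
proof -
  have "{h \<in> Cset 0 0. zc h = K} = (if K = 0 then {[]} else {})" by (auto simp: Cset_def)
  then show ?thesis by (simp add: W_def)
qed

lemma Wk0: "W (Suc k) 0 = 0"
proof -
  have E: "{h \<in> Cset 0 (Suc k). zc h = 0} = {}"
    using zc_pos by (fastforce simp: Cset_def)
  show ?thesis unfolding W_def E by simp
qed

lemma transp_ge_nat: "transp ((\<ge>) :: nat \<Rightarrow> nat \<Rightarrow> bool)"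
  by (auto simp: transp_def)

lemma Dset_alt: "Dset p m = {D. length D = m \<and> sorted_wrt (\<ge>) D \<and> (\<forall>y\<in>set D. 0 < y \<and> y \<le> p)}"
proof (rule set_eqI, rule iffI)
  fix D assume "D \<in> Dset p m"
  then have D: "length D = m" "bnd p D" "asc_ok (\<lambda>x. x = 0) D" "0 \<notin> set D"
    by (auto simp: Dset_def Cset_def)
  have s: "sorted_wrt (\<ge>) D"
    unfolding sorted_wrt_iff_nth_Suc_transp[of "(\<ge>)", OF transp_ge_nat]
  proof (intro allI impI)
    fix i assume i: "Suc i < length D"
    show "D ! Suc i \<le> D ! i"
    proof (rule ccontr)
      assume "\<not> D ! Suc i \<le> D ! i"
      then have "D ! i = 0" using D(3) i unfolding asc_ok_def by auto
      then show False using D(4) i by (metis Suc_lessD nth_mem)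
    qed
  qed
  have "\<forall>y\<in>set D. 0 < y \<and> y \<le> p"
  proof
    fix y assume "y \<in> set D"
    then obtain i where i: "i < length D" "D ! i = y" by (auto simp: in_set_conv_nth)
    have "D ! i \<le> D ! 0"
    proof (cases i)
      case 0 then show ?thesis by simp
    next
      case (Suc i') then show ?thesis using sorted_wrt_nth_less[OF s, of 0 i] i by simp
    qed
    moreover have "D ! 0 \<le> p" using D(2) i unfolding bnd_def by (metis add_0_right gr_implies_not0 neq0_conv)
    moreover have "y \<noteq> 0" using D(4) \<open>y \<in> set D\<close> by (cases y) auto
    ultimately show "0 < y \<and> y \<le> p" using i by auto
  qed
  then show "D \<in> {D. length D = m \<and> sorted_wrt (\<ge>) D \<and> (\<forall>y\<in>set D. 0 < y \<and> y \<le> p)}" using D s by auto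
next
  fix D assume "D \<in> {D. length D = m \<and> sorted_wrt (\<ge>) D \<and> (\<forall>y\<in>set D. 0 < y \<and> y \<le> p)}"
  then have D: "length D = m" "sorted_wrt (\<ge>) D" "\<forall>y\<in>set D. 0 < y \<and> y \<le> p" by auto
  have "bnd p D" unfolding bnd_def using D(3) by (auto simp: trans_le_add1 nth_mem)
  moreover have "asc_ok (\<lambda>x. x = 0) D" unfolding asc_ok_def
  proof (intro allI impI)
    fix a assume "Suc a < length D" "D ! a < D ! Suc a"
    moreover have "D ! Suc a \<le> D ! a"
      using D(2) \<open>Suc a < length D\<close> unfolding sorted_wrt_iff_nth_Suc_transp[of "(\<ge>)", OF transp_ge_nat] by auto
    ultimately show "D ! a = 0" by simp
  qed
  moreover have "0 \<notin> set D" using D(3) by auto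
  ultimately show "D \<in> Dset p m" using D by (auto simp: Dset_def Cset_def)
qed

lemma dc0: "dc p 0 = 1"
proof -
  have "Dset p 0 = {[]}" by (auto simp: Dset_alt)
  then show ?thesis by (simp add: dc_def)
qed

lemma dc0S: "dc 0 (Suc m) = 0"
proof -
  have "Dset 0 (Suc m) = {}" by (auto simp: Dset_alt length_Suc_conv)
  then show ?thesis by (simp add: dc_def)
qed

lemma dcSS: "dc (Suc p) (Suc m) = dc (Suc p) m + dc p (Suc m)"
proof -
  have eq: "Dset (Suc p) (Suc m) = (Cons (Suc p)) ` Dset (Suc p) m \<union> Dset p (Suc m)"
  proof (rule set_eqI, rule iffI)
    fix D assume "D \<in> Dset (Suc p) (Suc m)"
    then obtain x D' where D: "D = x # D'" "length D' = m" "\<forall>y\<in>set D'. y \<le> x" "sorted_wrt (\<ge>) D'"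
      "0 < x" "x \<le> Suc p" "\<forall>y\<in>set D'. 0 < y \<and> y \<le> Suc p"
      by (auto simp: Dset_alt length_Suc_conv)
    show "D \<in> (Cons (Suc p)) ` Dset (Suc p) m \<union> Dset p (Suc m)"
    proof (cases "x = Suc p")
      case True
      then have "D' \<in> Dset (Suc p) m" using D by (auto simp: Dset_alt)
      then show ?thesis using D True by auto
    next
      case False
      then have "x \<le> p" using D by simp
      then have "D \<in> Dset p (Suc m)" using D by (auto simp: Dset_alt)
      then show ?thesis by simp
    qed
  next
    fix D assume "D \<in> (Cons (Suc p)) ` Dset (Suc p) m \<union> Dset p (Suc m)"
    then show "D \<in> Dset (Suc p) (Suc m)" by (auto simp: Dset_alt)
  qed
  have disj: "(Cons (Suc p)) ` Dset (Suc p) m \<inter> Dset p (Suc m) = {}"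
    by (auto simp: Dset_alt)
  have fin: "finite (Dset q r)" for q r
    by (rule finite_subset[OF _ finite_Cset[of q r]]) (auto simp: Dset_def)
  have "card (Dset (Suc p) (Suc m)) = card ((Cons (Suc p)) ` Dset (Suc p) m) + card (Dset p (Suc m))"
    unfolding eq by (rule card_Un_disjoint) (use fin disj in auto)
  also have "card ((Cons (Suc p)) ` Dset (Suc p) m) = card (Dset (Suc p) m)"
    by (rule card_image) (simp add: inj_on_def)
  finally show ?thesis by (simp add: dc_def)
qed



lemma zc_eq0: "zc v = 0 \<longleftrightarrow> 0 \<notin> set v"
  by (induction v) auto

lemma zero_split_card:
  fixes S A :: "nat list set" and B :: "nat \<Rightarrow> nat list set"
  assumes fin: "finite S"
    and len: "\<And>h. h \<in> S \<Longrightarrow> length h = N"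
    and zk: "\<And>h. h \<in> S \<Longrightarrow> K < zc h"
    and mem1: "\<And>u v. u @ 0 # v \<in> S \<Longrightarrow> zc u = K \<Longrightarrow> u \<in> A \<and> v \<in> B (length u)"
    and mem2: "\<And>u v. u \<in> A \<Longrightarrow> v \<in> B (length u) \<Longrightarrow> length u < N \<Longrightarrow> u @ 0 # v \<in> S"
    and Az: "\<And>u. u \<in> A \<Longrightarrow> zc u = K"
  shows "card S = (\<Sum>j<N. card {u \<in> A. length u = j} * card (B j))"
proof -
  let ?Z = "\<lambda>x::nat. x = 0"
  have "card S = (\<Sum>j\<in>{..<N}. card {h \<in> S. zpos ?Z K h = j})"
  proof (rule card_partition[OF fin])
    fix h assume h: "h \<in> S"
    then have "K < cZ ?Z h" using zk by (simp add: zc_cZ)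
    then show "zpos ?Z K h \<in> {..<N}" using zpos_props(1)[of K ?Z h] len[OF h] by simp
  qed simp
  also have "\<dots> = (\<Sum>j<N. card {u \<in> A. length u = j} * card (B j))"
  proof (rule sum.cong[OF refl])
    fix j assume j: "j \<in> {..<N}"
    let ?A = "(\<lambda>u. u @ [0]) ` {u \<in> A. length u = j}"
    have "card {h \<in> S. zpos ?Z K h = j} = card (?A \<times> B j)"
    proof (rule card_split_bij[where j = "Suc j"])
      fix h assume h: "h \<in> {h \<in> S. zpos ?Z K h = j}"
      have Kl: "K < cZ ?Z h" using h zk by (simp add: zc_cZ)
      note zp = zpos_props[OF Kl]
      have jl: "j < length h" and h0: "h ! j = 0" and zt: "zc (take j h) = K"
        using zp h by (auto simp: zc_cZ)
      have dec: "h = take j h @ 0 # drop (Suc j) h" using jl h0 by (metis id_take_nth_drop)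
      have "take j h @ 0 # drop (Suc j) h \<in> S" using dec h by simp
      from mem1[OF this zt] have "take j h \<in> A" "drop (Suc j) h \<in> B j"
        using jl by auto
      moreover have "take (Suc j) h = take j h @ [0]" using jl h0 by (simp add: take_Suc_conv_app_nth)
      ultimately show "(take (Suc j) h, drop (Suc j) h) \<in> ?A \<times> B j" using jl by auto
    next
      fix a b assume ab: "(a, b) \<in> ?A \<times> B j"
      then obtain u where a: "a = u @ [0]" "u \<in> A" "length u = j" and b: "b \<in> B j" by auto
      have "u @ 0 # b \<in> S" using mem2[OF a(2)] b a(3) j by auto
      moreover have "zpos ?Z K (u @ 0 # b) = j"
        using zpos_append[of ?Z 0 u K b] Az[OF a(2)] a(3) by (simp add: zc_cZ)
      ultimately show "a @ b \<in> {h \<in> S. zpos ?Z K h = j} \<and> length a = Suc j" using a by simp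
    qed
    also have "\<dots> = card {u \<in> A. length u = j} * card (B j)"
      by (simp add: card_cartesian_product card_image inj_on_def)
    finally show "card {h \<in> S. zpos ?Z K h = j} = card {u \<in> A. length u = j} * card (B j)" .
  qed
  finally show ?thesis .
qed

lemma W_block: "W (Suc k) (Suc K) = (\<Sum>j\<le>k. W j K * dc (Suc j) (k - j))"
proof -
  let ?S = "{h \<in> Cset 0 (Suc k). zc h = Suc K}"
  let ?A = "{u. u \<in> Cset 0 (length u) \<and> zc u = K}"
  have "card ?S = (\<Sum>j<Suc k. card {u \<in> ?A. length u = j} * card (Dset (Suc j) (k - j)))"
  proof (rule zero_split_card)
    show "finite ?S" using finite_Cset by simp
    show "length h = Suc k" if "h \<in> ?S" for h using that by (simp add: Cset_def)
    show "K < zc h" if "h \<in> ?S" for h using that by simp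
    show "u \<in> ?A \<and> v \<in> Dset (Suc (length u)) (k - length u)" if "u @ 0 # v \<in> ?S" "zc u = K" for u v
      using that by (auto simp: Cset_zero_split Dset_def zc_eq0[symmetric])
    show "u @ 0 # v \<in> ?S" if "u \<in> ?A" "v \<in> Dset (Suc (length u)) (k - length u)" "length u < Suc k" for u v
    proof -
      have z: "zc v = 0" using that(2) by (simp add: Dset_def zc_eq0)
      have v: "v \<in> Cset (Suc (length u)) (k - length u)" using that(2) by (simp add: Dset_def)
      then have lv: "length v = k - length u" by (simp add: Cset_def)
      have "u @ 0 # v \<in> Cset 0 (Suc k)" unfolding Cset_zero_split using that v lv by auto
      then show ?thesis using that z by simp
    qed
    show "zc u = K" if "u \<in> ?A" for u using that by simp
  qed
  moreover have "{u \<in> ?A. length u = j} = {u \<in> Cset 0 j. zc u = K}" for j by (auto simp: Cset_def)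
  ultimately show ?thesis by (simp add: W_def dc_def lessThan_Suc_atMost)
qed

lemma W_stirling: "W (Suc k) (Suc K) = W k K + Suc K * W k (Suc K)"
  using stirling_from_block[of W dc, OF W0 Wk0 W_block dc0 dc0S dcSS] .



definition Hset :: "nat \<Rightarrow> nat list set" where
  "Hset k = {h \<in> I120 k. asc_ok (\<lambda>x. x \<le> 1) h}"

definition Qset :: "nat \<Rightarrow> nat \<Rightarrow> nat list set" where
  "Qset p m = {Q. length Q = m \<and> bnd p Q \<and> (\<forall>y\<in>set Q. 0 < y) \<and> asc_ok (\<lambda>x. x = 1) Q}"

definition H :: "nat \<Rightarrow> nat \<Rightarrow> nat" where "H k K = card {h \<in> Hset k. zc h = K}"

lemma av120_snoc_asc: "av120 (h @ [x]) \<Longrightarrow> asc_ok (\<lambda>y. y \<le> x) h"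
  unfolding asc_ok_def
proof (intro allI impI)
  fix a assume h: "av120 (h @ [x])" and a: "Suc a < length h" "h ! a < h ! Suc a"
  have "(h @ [x]) ! a \<le> (h @ [x]) ! length h"
    using h[unfolded av120_def, rule_format, of a "length h"] a by (simp add: nth_append)
  then show "h ! a \<le> x" using a by (simp add: nth_append)
qed

lemma asc_snoc_av120: "av120 h \<Longrightarrow> asc_ok (\<lambda>y. y \<le> x) h \<Longrightarrow> av120 (h @ [x])"
  unfolding av120_def
proof (intro allI impI)
  fix a q assume h: "\<forall>a q. Suc a < q \<longrightarrow> q < length h \<longrightarrow> h ! a < h ! Suc a \<longrightarrow> h ! a \<le> h ! q"
    and ho: "asc_ok (\<lambda>y. y \<le> x) h"
    and aq: "Suc a < q" "q < length (h @ [x])" "(h @ [x]) ! a < (h @ [x]) ! Suc a"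
  show "(h @ [x]) ! a \<le> (h @ [x]) ! q"
  proof (cases "q < length h")
    case True
    then show ?thesis using h aq by (simp add: nth_append)
  next
    case False
    then have q: "q = length h" using aq by simp
    then have "Suc a < length h" "h ! a < h ! Suc a" using aq by (auto simp: nth_append)
    then have "h ! a \<le> x" using ho unfolding asc_ok_def by blast
    then show ?thesis using q aq by (simp add: nth_append)
  qed
qed

lemma asc0_av120: "asc_ok (\<lambda>x. x = 0) h \<Longrightarrow> av120 h"
  unfolding asc_ok_def av120_def
proof (intro allI impI)
  fix a q assume h: "\<forall>a. Suc a < length h \<longrightarrow> h ! a < h ! Suc a \<longrightarrow> h ! a = 0"
    and aq: "Suc a < q" "q < length h" "h ! a < h ! Suc a"
  then have "h ! a = 0" by auto
  then show "h ! a \<le> h ! q" by simp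
qed

lemma zc_eq0_pos: "zc v = 0 \<Longrightarrow> \<forall>y\<in>set v. 0 < y"
  by (induction v) (auto split: if_split_asm)

lemma asc1_av120: "asc_ok (\<lambda>x. x = 1) Q \<Longrightarrow> \<forall>y\<in>set Q. 0 < y \<Longrightarrow> av120 Q"
  unfolding asc_ok_def av120_def
proof (intro allI impI)
  fix a q assume h: "\<forall>a. Suc a < length Q \<longrightarrow> Q ! a < Q ! Suc a \<longrightarrow> Q ! a = 1"
    and p: "\<forall>y\<in>set Q. 0 < y" and aq: "Suc a < q" "q < length Q" "Q ! a < Q ! Suc a"
  have "Q ! a = 1" using h aq by auto
  moreover have "0 < Q ! q" using p aq by auto
  ultimately show "Q ! a \<le> Q ! q" by simp
qed

lemma inv_seqs_bnd: "h \<in> inv_seqs k \<longleftrightarrow> length h = k \<and> bnd 0 h"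
  by (simp add: inv_seqs_alt)

lemma snoc0: "h @ [0] \<in> I120 (Suc k) \<longleftrightarrow> h \<in> Cset 0 k"
proof
  assume a: "h @ [0] \<in> I120 (Suc k)"
  then have "length h = k" "bnd 0 h" by (auto simp: I120_def inv_seqs_bnd bnd_append)
  moreover have "asc_ok (\<lambda>y. y \<le> 0) h" using a by (intro av120_snoc_asc) (simp add: I120_def)
  then have "asc_ok (\<lambda>y. y = 0) h" by (rule asc_ok_mono) simp
  ultimately show "h \<in> Cset 0 k" by (simp add: Cset_def)
next
  assume a: "h \<in> Cset 0 k"
  then have "length h = k" "bnd 0 h" "asc_ok (\<lambda>y. y = 0) h" by (auto simp: Cset_def)
  moreover have "av120 (h @ [0])"
    using asc_snoc_av120[OF asc0_av120[OF \<open>asc_ok (\<lambda>y. y = 0) h\<close>]]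
      asc_ok_mono[OF \<open>asc_ok (\<lambda>y. y = 0) h\<close>, of "\<lambda>y. y \<le> 0"] by simp
  ultimately show "h @ [0] \<in> I120 (Suc k)" by (simp add: I120_def inv_seqs_bnd bnd_append bnd_Cons)
qed

lemma snoc1: "1 \<le> k \<Longrightarrow> h @ [1] \<in> I120 (Suc k) \<longleftrightarrow> h \<in> Hset k"
proof
  assume a: "h @ [1] \<in> I120 (Suc k)"
  then have l: "length h = k" "bnd 0 h" by (auto simp: I120_def inv_seqs_bnd bnd_append)
  have "av120 (take k (h @ [1]))" using a by (intro av120_take) (simp add: I120_def)
  then have "av120 h" using l by simp
  moreover have "asc_ok (\<lambda>y. y \<le> 1) h" using a by (intro av120_snoc_asc) (simp add: I120_def)
  ultimately show "h \<in> Hset k" using l by (simp add: Hset_def I120_def inv_seqs_bnd)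
next
  assume k: "1 \<le> k" and a: "h \<in> Hset k"
  then have "length h = k" "bnd 0 h" "av120 h" "asc_ok (\<lambda>y. y \<le> 1) h"
    by (auto simp: Hset_def I120_def inv_seqs_bnd)
  moreover have "av120 (h @ [1])" using asc_snoc_av120 calculation by blast
  ultimately show "h @ [1] \<in> I120 (Suc k)" using k by (simp add: I120_def inv_seqs_bnd bnd_append bnd_Cons)
qed

lemma asc_le1_pos: "asc_ok (\<lambda>x. x \<le> 1) Q \<Longrightarrow> \<forall>y\<in>set Q. 0 < y \<Longrightarrow> asc_ok (\<lambda>x. x = 1) Q"
  unfolding asc_ok_def
proof (intro allI impI)
  fix a assume h: "\<forall>a. Suc a < length Q \<longrightarrow> Q ! a < Q ! Suc a \<longrightarrow> Q ! a \<le> 1"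
    and p: "\<forall>y\<in>set Q. 0 < y" and a: "Suc a < length Q" "Q ! a < Q ! Suc a"
  have "Q ! a \<le> 1" using h a by auto
  moreover have "0 < Q ! a" using p a by auto
  ultimately show "Q ! a = 1" by simp
qed

lemma Hsplit:
  assumes pos: "\<forall>y\<in>set Q. 0 < y"
  shows "u @ 0 # Q \<in> Hset N \<longleftrightarrow> N = length u + Suc (length Q) \<and> u \<in> Cset 0 (length u) \<and> Q \<in> Qset (Suc (length u)) (length Q)"
proof
  assume a: "u @ 0 # Q \<in> Hset N"
  then have l: "N = length u + Suc (length Q)" "bnd 0 u" "bnd (Suc (length u)) Q"
    by (auto simp: Hset_def I120_def inv_seqs_bnd bnd_append bnd_Cons)
  have av: "av120 (u @ 0 # Q)" using a by (simp add: Hset_def I120_def)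
  have "av120 (take (Suc (length u)) (u @ 0 # Q))" using av by (rule av120_take)
  then have "av120 (u @ [0])" by simp
  then have "asc_ok (\<lambda>y. y \<le> 0) u" by (rule av120_snoc_asc)
  then have u0: "asc_ok (\<lambda>y. y = 0) u" by (rule asc_ok_mono) simp
  have "asc_ok (\<lambda>x. x \<le> 1) (u @ 0 # Q)" using a by (simp add: Hset_def)
  then have "asc_ok (\<lambda>x. x \<le> 1) Q" by (simp add: asc_ok_append asc_ok_Cons)
  then have "asc_ok (\<lambda>x. x = 1) Q" using pos by (rule asc_le1_pos)
  then show "N = length u + Suc (length Q) \<and> u \<in> Cset 0 (length u) \<and> Q \<in> Qset (Suc (length u)) (length Q)"
    using l u0 pos by (simp add: Cset_def Qset_def)
next
  assume a: "N = length u + Suc (length Q) \<and> u \<in> Cset 0 (length u) \<and> Q \<in> Qset (Suc (length u)) (length Q)"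
  then have N: "N = length u + Suc (length Q)" and u: "bnd 0 u" "asc_ok (\<lambda>y. y = 0) u"
    and q: "bnd (Suc (length u)) Q" "asc_ok (\<lambda>x. x = 1) Q"
    by (auto simp: Cset_def Qset_def)
  have av1: "av120 (u @ [0])"
    using asc_snoc_av120[OF asc0_av120[OF u(2)]] asc_ok_mono[OF u(2), of "\<lambda>y. y \<le> 0"] by simp
  have av2: "av120 Q" using q(2) pos by (rule asc1_av120)
  have "av120 ((u @ [0]) @ Q)" by (rule av120_glue[OF av1 av2]) (use pos in auto)
  then have av: "av120 (u @ 0 # Q)" by simp
  have as: "asc_ok (\<lambda>x. x \<le> 1) (u @ 0 # Q)"
    using asc_ok_mono[OF u(2), of "\<lambda>x. x \<le> 1"] asc_ok_mono[OF q(2), of "\<lambda>x. x \<le> 1"]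
    by (simp add: asc_ok_append asc_ok_Cons)
  show "u @ 0 # Q \<in> Hset N" using N u q av as
    by (simp add: Hset_def I120_def inv_seqs_bnd bnd_append bnd_Cons)
qed

lemma Qset_map: "Qset (Suc p) m = map Suc ` Cset p m"
proof (rule set_eqI, rule iffI)
  fix Q assume q: "Q \<in> Qset (Suc p) m"
  then have Q: "length Q = m" "bnd (Suc p) Q" "\<forall>y\<in>set Q. 0 < y" "asc_ok (\<lambda>x. x = 1) Q"
    by (auto simp: Qset_def)
  let ?P = "map (\<lambda>x. x - 1) Q"
  have e: "Q = map Suc ?P" using Q(3) by (induction Q) auto
  have "bnd p ?P" using Q(2) unfolding bnd_def by auto
  moreover have "asc_ok (\<lambda>x. x = 0) ?P" unfolding asc_ok_def
  proof (intro allI impI)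
    fix a assume a: "Suc a < length ?P" "?P ! a < ?P ! Suc a"
    have "0 < Q ! a" "0 < Q ! Suc a" using Q(3) a by auto
    then have "Q ! a < Q ! Suc a" using a by simp
    then have "Q ! a = 1" using Q(4) a unfolding asc_ok_def by auto
    then show "?P ! a = 0" using a by simp
  qed
  ultimately have "?P \<in> Cset p m" using Q(1) by (simp add: Cset_def)
  then show "Q \<in> map Suc ` Cset p m" using e by blast
next
  fix Q assume "Q \<in> map Suc ` Cset p m"
  then obtain P where P: "Q = map Suc P" "length P = m" "bnd p P" "asc_ok (\<lambda>x. x = 0) P"
    by (auto simp: Cset_def)
  have "bnd (Suc p) Q" using P(1,3) unfolding bnd_def by auto
  moreover have "asc_ok (\<lambda>x. x = 1) Q" using P(1,4) unfolding asc_ok_def by auto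
  ultimately show "Q \<in> Qset (Suc p) m" using P by (auto simp: Qset_def)
qed

lemma card_Qset: "card (Qset (Suc p) m) = cc p m"
  unfolding Qset_map cc_def by (rule card_image) (simp add: inj_on_def)

lemma finite_Hset: "finite (Hset k)"
  by (rule finite_subset[OF _ finite_I120[of k]]) (auto simp: Hset_def)

lemma H_D1: "H (Suc k) (Suc K) = (\<Sum>j\<le>k. W j K * cc j (k - j))"
proof -
  let ?S = "{h \<in> Hset (Suc k). zc h = Suc K}"
  let ?A = "{u. u \<in> Cset 0 (length u) \<and> zc u = K}"
  have "card ?S = (\<Sum>j<Suc k. card {u \<in> ?A. length u = j} * card (Qset (Suc j) (k - j)))"
  proof (rule zero_split_card)
    show "finite ?S" using finite_Hset by simp
    show "length h = Suc k" if "h \<in> ?S" for h using that by (simp add: Hset_def I120_def inv_seqs_bnd)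
    show "K < zc h" if "h \<in> ?S" for h using that by simp
    show "u \<in> ?A \<and> v \<in> Qset (Suc (length u)) (k - length u)" if "u @ 0 # v \<in> ?S" "zc u = K" for u v
    proof -
      have "zc v = 0" using that by simp
      then have pos: "\<forall>y\<in>set v. 0 < y" by (rule zc_eq0_pos)
      then show ?thesis using that Hsplit[OF pos, of u "Suc k"] by auto
    qed
    show "u @ 0 # v \<in> ?S" if "u \<in> ?A" "v \<in> Qset (Suc (length u)) (k - length u)" "length u < Suc k" for u v
    proof -
      have pos: "\<forall>y\<in>set v. 0 < y" and lv: "length v = k - length u" using that(2) by (auto simp: Qset_def)
      then have z: "zc v = 0" by (auto simp: zc_eq0)
      have "u @ 0 # v \<in> Hset (Suc k)" unfolding Hsplit[OF pos] using that lv by auto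
      then show ?thesis using that z by simp
    qed
    show "zc u = K" if "u \<in> ?A" for u using that by simp
  qed
  moreover have "{u \<in> ?A. length u = j} = {u \<in> Cset 0 j. zc u = K}" for j by (auto simp: Cset_def)
  ultimately show ?thesis by (simp add: H_def W_def card_Qset lessThan_Suc_atMost)
qed

lemma H_D2: "Wge N (Suc K) = (\<Sum>j<N. W j K * cc (Suc j) (N - Suc j))"
proof -
  let ?S = "{h \<in> Cset 0 N. Suc K \<le> zc h}"
  let ?A = "{u. u \<in> Cset 0 (length u) \<and> zc u = K}"
  have "card ?S = (\<Sum>j<N. card {u \<in> ?A. length u = j} * card (Cset (Suc j) (N - Suc j)))"
  proof (rule zero_split_card)
    show "finite ?S" using finite_Cset by simp
    show "length h = N" if "h \<in> ?S" for h using that by (simp add: Cset_def)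
    show "K < zc h" if "h \<in> ?S" for h using that by simp
    show "u \<in> ?A \<and> v \<in> Cset (Suc (length u)) (N - Suc (length u))" if "u @ 0 # v \<in> ?S" "zc u = K" for u v
      using that by (auto simp: Cset_zero_split)
    show "u @ 0 # v \<in> ?S" if "u \<in> ?A" "v \<in> Cset (Suc (length u)) (N - Suc (length u))" "length u < N" for u v
    proof -
      have lv: "length v = N - Suc (length u)" using that(2) by (simp add: Cset_def)
      have "u @ 0 # v \<in> Cset 0 N" unfolding Cset_zero_split using that lv by auto
      then show ?thesis using that by simp
    qed
    show "zc u = K" if "u \<in> ?A" for u using that by simp
  qed
  moreover have "{u \<in> ?A. length u = j} = {u \<in> Cset 0 j. zc u = K}" for j by (auto simp: Cset_def)
  ultimately show ?thesis by (simp add: Wge_def W_def cc_def)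
qed

lemma H_D3: "Wge N K = W N K + Wge N (Suc K)"
proof -
  have e: "{h \<in> Cset 0 N. K \<le> zc h} = {h \<in> Cset 0 N. zc h = K} \<union> {h \<in> Cset 0 N. Suc K \<le> zc h}" by auto
  have "card ({h \<in> Cset 0 N. zc h = K} \<union> {h \<in> Cset 0 N. Suc K \<le> zc h})
      = card {h \<in> Cset 0 N. zc h = K} + card {h \<in> Cset 0 N. Suc K \<le> zc h}"
    by (rule card_Un_disjoint) (use finite_Cset in auto)
  then show ?thesis unfolding Wge_def W_def e .
qed

lemma H_D4: "cc 0 N = Wge N 0"
  by (simp add: cc_def Wge_def)

lemma H_I1: "H (Suc k) (Suc K) = W k K + Suc K * Wge k (Suc K)"
  using H_from_parts[of W H cc Wge, OF W0 Wk0 W_stirling H_D1 H_D2 H_D3 H_D4] .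

lemma H_0: "H (Suc k) 0 = 0"
proof -
  have E: "{h \<in> Hset (Suc k). zc h = 0} = {}"
    using zc_pos by (fastforce simp: Hset_def I120_def inv_seqs_bnd)
  show ?thesis unfolding H_def E by simp
qed



lemma I120_nonempty: "g \<in> I120 (Suc k) \<Longrightarrow> g \<noteq> []"
  by (auto simp: I120_def inv_seqs_bnd)

lemma E0_card: "card {g \<in> I120 (Suc k). last g = 0 \<and> P (zc g)} = card {h \<in> Cset 0 k. P (Suc (zc h))}"
proof -
  have "{g \<in> I120 (Suc k). last g = 0 \<and> P (zc g)} = (\<lambda>h. h @ [0]) ` {h \<in> Cset 0 k. P (Suc (zc h))}"
  proof (rule set_eqI, rule iffI)
    fix g assume g: "g \<in> {g \<in> I120 (Suc k). last g = 0 \<and> P (zc g)}"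
    then have ne: "g \<noteq> []" using I120_nonempty by blast
    have lg: "last g = 0" using g by simp
    have e: "g = butlast g @ [0]" using append_butlast_last_id[OF ne] lg by simp
    have gi: "g \<in> I120 (Suc k)" "P (zc g)" using g by auto
    then have "butlast g @ [0] \<in> I120 (Suc k)" using e by simp
    then have "butlast g \<in> Cset 0 k" using snoc0 by blast
    moreover have "zc g = Suc (zc (butlast g))" using e by (metis zc_simps(1,2,3) add_Suc_right add_0_right)
    then have "P (Suc (zc (butlast g)))" using gi by simp
    ultimately show "g \<in> (\<lambda>h. h @ [0]) ` {h \<in> Cset 0 k. P (Suc (zc h))}" using e by blast
  next
    fix g assume "g \<in> (\<lambda>h. h @ [0]) ` {h \<in> Cset 0 k. P (Suc (zc h))}"
    then obtain h where "g = h @ [0]" "h \<in> Cset 0 k" "P (Suc (zc h))" by auto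
    then show "g \<in> {g \<in> I120 (Suc k). last g = 0 \<and> P (zc g)}" using snoc0 by simp
  qed
  then show ?thesis by (simp add: card_image inj_on_def)
qed

lemma E1_card:
  assumes k: "1 \<le> k"
  shows "card {g \<in> I120 (Suc k). last g = 1 \<and> P (zc g)} = card {h \<in> Hset k. P (zc h)}"
proof -
  have "{g \<in> I120 (Suc k). last g = 1 \<and> P (zc g)} = (\<lambda>h. h @ [1]) ` {h \<in> Hset k. P (zc h)}"
  proof (rule set_eqI, rule iffI)
    fix g assume g: "g \<in> {g \<in> I120 (Suc k). last g = 1 \<and> P (zc g)}"
    then have ne: "g \<noteq> []" using I120_nonempty by blast
    have lg: "last g = 1" using g by simp
    have e: "g = butlast g @ [1]" using append_butlast_last_id[OF ne] lg by simp
    have gi: "g \<in> I120 (Suc k)" "P (zc g)" using g by auto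
    then have "butlast g @ [1] \<in> I120 (Suc k)" using e by simp
    then have "butlast g \<in> Hset k" using snoc1[OF k] by blast
    moreover have "zc g = zc (butlast g)" using e by (metis zc_simps(1,2,3) add_0_right one_neq_zero)
    then have "P (zc (butlast g))" using gi by simp
    ultimately show "g \<in> (\<lambda>h. h @ [1]) ` {h \<in> Hset k. P (zc h)}" using e by blast
  next
    fix g assume "g \<in> (\<lambda>h. h @ [1]) ` {h \<in> Hset k. P (zc h)}"
    then obtain h where "g = h @ [1]" "h \<in> Hset k" "P (zc h)" by auto
    then show "g \<in> {g \<in> I120 (Suc k). last g = 1 \<and> P (zc g)}" using snoc1[OF k] by simp
  qed
  then show ?thesis by (simp add: card_image inj_on_def)
qed

lemma I0_120:
  assumes "1 \<le> k"
  shows "card {g \<in> I120 (Suc k). last g = 0 \<and> zc g = z}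
       = card {c \<in> I120 k. last c = 0 \<and> Suc (zc c) = z} + (z - 1) * card {c \<in> I120 k. last c = 0 \<and> zc c = z}"
proof -
  obtain k' where k: "k = Suc k'" using assms by (cases k) auto
  have L: "card {g \<in> I120 (Suc k). last g = 0 \<and> zc g = z} = card {h \<in> Cset 0 (Suc k'). Suc (zc h) = z}"
    using E0_card[of "Suc k'" "\<lambda>x. x = z"] k by simp
  have R1: "card {c \<in> I120 k. last c = 0 \<and> Suc (zc c) = z} = card {h \<in> Cset 0 k'. Suc (Suc (zc h)) = z}"
    using E0_card[of k' "\<lambda>x. Suc x = z"] k by simp
  have R2: "card {c \<in> I120 k. last c = 0 \<and> zc c = z} = card {h \<in> Cset 0 k'. Suc (zc h) = z}"
    using E0_card[of k' "\<lambda>x. x = z"] k by simp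
  show ?thesis
  proof (cases z)
    case 0 then show ?thesis unfolding L R1 R2 by simp
  next
    case (Suc K)
    show ?thesis
    proof (cases K)
      case 0
      have "W (Suc k') 0 = 0" by (rule Wk0)
      then show ?thesis unfolding L R1 R2 using Suc 0 by (simp add: W_def)
    next
      case (Suc K2)
      have "W (Suc k') (Suc K2) = W k' K2 + Suc K2 * W k' (Suc K2)" by (rule W_stirling)
      then show ?thesis unfolding L R1 R2 using Suc \<open>z = Suc K\<close> by (simp add: W_def)
    qed
  qed
qed

lemma I1_120:
  assumes "1 \<le> k"
  shows "card {g \<in> I120 (Suc k). last g = 1 \<and> zc g = z}
       = card {c \<in> I120 k. last c = 0 \<and> zc c = z} + z * card {c \<in> I120 k. last c = 0 \<and> z < zc c}"
proof -
  obtain k' where k: "k = Suc k'" using assms by (cases k) auto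
  have L: "card {g \<in> I120 (Suc k). last g = 1 \<and> zc g = z} = H (Suc k') z"
    using E1_card[of k "\<lambda>x. x = z"] k by (simp add: H_def)
  have R1: "card {c \<in> I120 k. last c = 0 \<and> zc c = z} = card {h \<in> Cset 0 k'. Suc (zc h) = z}"
    using E0_card[of k' "\<lambda>x. x = z"] k by simp
  have R2: "card {c \<in> I120 k. last c = 0 \<and> z < zc c} = card {h \<in> Cset 0 k'. z < Suc (zc h)}"
    using E0_card[of k' "\<lambda>x. z < x"] k by simp
  show ?thesis
  proof (cases z)
    case 0 then show ?thesis unfolding L R1 R2 by (simp add: H_0)
  next
    case (Suc K)
    have "H (Suc k') (Suc K) = W k' K + Suc K * Wge k' (Suc K)" by (rule H_I1)
    moreover have "{h \<in> Cset 0 k'. Suc K < Suc (zc h)} = {h \<in> Cset 0 k'. Suc K \<le> zc h}" by auto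
    ultimately show ?thesis unfolding L R1 R2 using Suc by (simp add: W_def Wge_def)
  qed
qed



definition Tail :: "nat \<Rightarrow> nat \<Rightarrow> nat list set" where
  "Tail k m = {q. length q = m \<and> bnd k q \<and> (\<forall>y\<in>set q. 0 < y) \<and> av120 q}"

definition lv :: "nat list \<Rightarrow> nat" where "lv q = (if q = [] then 0 else last q)"

lemma finite_Tail: "finite (Tail k m)"
  by (rule finite_subset[OF _ finite_bnd[of m k]]) (auto simp: Tail_def)

lemma zc_pos0: "\<forall>y\<in>set q. 0 < y \<Longrightarrow> zc q = 0"
  by (induction q) auto

lemma stats_ct:
  assumes "c \<noteq> []" "last c = 0" "\<forall>y\<in>set q. 0 < y"
  shows "stats (c @ q) = (lv q, zc c, Suc (rm q))"
proof -
  have "last (c @ q) = lv q" using assms by (simp add: lv_def)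
  moreover have "zc (c @ q) = zc c" using zc_pos0[OF assms(3)] by simp
  moreover have "rm (c @ q) = Suc (rm q)"
    using rm_append[of c q] rm_last0[of c] assms by simp
  ultimately show ?thesis by (simp add: stats_def)
qed

lemma rm_map_Suc: "rm (map Suc q) = rm q"
  by (induction q) (auto simp: rm_Cons)

lemma av120_map_Suc: "av120 (map Suc q) \<longleftrightarrow> av120 q"
  by (simp add: av120_def)

lemma rm_g: "0 \<in> set g \<Longrightarrow> last g \<le> 1 \<Longrightarrow> g \<noteq> [] \<Longrightarrow> rm g = Suc (last g)"
proof -
  assume a: "0 \<in> set g" "last g \<le> 1" "g \<noteq> []"
  show ?thesis
  proof (cases "last g = 0")
    case True then show ?thesis using rm_last0 a by simp
  next
    case False then have "last g = 1" using a by simp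
    then show ?thesis using rm_last1 a by simp
  qed
qed

lemma stats_gt:
  assumes "g \<noteq> []" "0 \<in> set g" "last g \<le> 1" "\<forall>y\<in>set r. 1 < y"
  shows "stats (g @ r) = (if r = [] then last g else last r, zc g, Suc (last g) + rm r)"
proof -
  have "zc r = 0" using assms(4) by (intro zc_pos0) auto
  moreover have "rm (g @ r) = rm g + rm r" using assms by (intro rm_append) auto
  ultimately show ?thesis using rm_g[OF assms(2,3,1)] by (simp add: stats_def)
qed

lemma take_drop_bnd: "bnd 0 e \<Longrightarrow> k \<le> length e \<Longrightarrow> bnd 0 (take k e) \<and> bnd k (drop k e)"
  using bnd_append[of 0 "take k e" "drop k e"] by simp

lemma core_tail_card:
  assumes n: "1 \<le> n"
  shows "card {e \<in> I120 n. P (stats e)}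
    = (\<Sum>k\<in>{1..n}. card {(c, q) \<in> {c \<in> I120 k. last c = 0} \<times> Tail k (n - k). P (lv q, zc c, Suc (rm q))})"
proof -
  let ?Z = "\<lambda>x::nat. x = 0"
  let ?S = "{e \<in> I120 n. P (stats e)}"
  let ?sp = "\<lambda>e. Suc (zpos ?Z (zc e - 1) e)"
  have basic: "length e = n" "bnd 0 e" "av120 e" "e \<noteq> []" "0 < zc e" if "e \<in> I120 n" for e
  proof -
    have 1: "length e = n" "bnd 0 e" "av120 e" using that by (auto simp: I120_def inv_seqs_bnd)
    then have 2: "e \<noteq> []" using n by auto
    show "length e = n" "bnd 0 e" "av120 e" "e \<noteq> []" "0 < zc e" using 1 2 zc_pos[OF 1(2) 2] by auto
  qed
  have "card ?S = (\<Sum>k\<in>{1..n}. card {e \<in> ?S. ?sp e = k})"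
  proof (rule card_partition)
    show "finite ?S" using finite_I120 by simp
    fix e assume "e \<in> ?S"
    then have b: "length e = n" "0 < zc e" using basic by auto
    then have "zc e - 1 < cZ ?Z e" by (simp add: zc_cZ)
    then show "?sp e \<in> {1..n}" using zpos_props(1)[of "zc e - 1" ?Z e] b by simp
  qed simp
  also have "\<dots> = (\<Sum>k\<in>{1..n}. card {(c, q) \<in> {c \<in> I120 k. last c = 0} \<times> Tail k (n - k). P (lv q, zc c, Suc (rm q))})"
  proof (rule sum.cong[OF refl])
    fix k assume k: "k \<in> {1..n}"
    show "card {e \<in> ?S. ?sp e = k} = card {(c, q) \<in> {c \<in> I120 k. last c = 0} \<times> Tail k (n - k). P (lv q, zc c, Suc (rm q))}"
    proof (rule card_split_bij[where j = k])
      fix e assume e: "e \<in> {e \<in> ?S. ?sp e = k}"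
      then have eI: "e \<in> I120 n" and Pe: "P (stats e)" and spk: "?sp e = k" by auto
      note b = basic[OF eI]
      let ?j = "zpos ?Z (zc e - 1) e"
      have lt: "zc e - 1 < cZ ?Z e" using b by (simp add: zc_cZ)
      have jl: "?j < length e" and j0: "e ! ?j = 0" and zt: "zc (take ?j e) = zc e - 1"
        using zpos_props[OF lt] by (auto simp: zc_cZ)
      have kj: "k = Suc ?j" using spk by simp
      have c_eq: "take k e = take ?j e @ [0]" using kj jl j0 by (simp add: take_Suc_conv_app_nth)
      have kl: "k \<le> length e" using kj jl by simp
      have cI: "take k e \<in> I120 k"
        using take_drop_bnd[OF b(2) kl] av120_take[OF b(3)] kl by (simp add: I120_def inv_seqs_bnd)
      have cl: "last (take k e) = 0" using c_eq by simp
      have zsum: "zc e = zc (take k e) + zc (drop k e)" by (metis append_take_drop_id zc_simps(3))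
      have "zc (take k e) = zc e" using c_eq zt b(5) by simp
      then have "zc (drop k e) = 0" using zsum by simp
      then have pos: "\<forall>y\<in>set (drop k e). 0 < y" by (rule zc_eq0_pos)
      have qT: "drop k e \<in> Tail k (n - k)"
        using take_drop_bnd[OF b(2) kl] av120_drop[OF b(3)] pos b(1) by (simp add: Tail_def)
      have ne_c: "take k e \<noteq> []" using c_eq by simp
      have "stats (take k e @ drop k e) = (lv (drop k e), zc (take k e), Suc (rm (drop k e)))"
        by (rule stats_ct[OF ne_c cl pos])
      then have "stats e = (lv (drop k e), zc (take k e), Suc (rm (drop k e)))" by simp
      then show "(take k e, drop k e) \<in> {(c, q) \<in> {c \<in> I120 k. last c = 0} \<times> Tail k (n - k). P (lv q, zc c, Suc (rm q))}"
        using cI cl qT Pe by simp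
    next
      fix c q assume cq: "(c, q) \<in> {(c, q) \<in> {c \<in> I120 k. last c = 0} \<times> Tail k (n - k). P (lv q, zc c, Suc (rm q))}"
      then have cI: "c \<in> I120 k" and cl: "last c = 0" and qT: "q \<in> Tail k (n - k)" and Pq: "P (lv q, zc c, Suc (rm q))"
        by auto
      have lc: "length c = k" "bnd 0 c" "av120 c" using cI by (auto simp: I120_def inv_seqs_bnd)
      have ne: "c \<noteq> []" using lc k by auto
      have q: "length q = n - k" "bnd k q" "\<forall>y\<in>set q. 0 < y" "av120 q" using qT by (auto simp: Tail_def)
      have "av120 (c @ q)" using av120_glue[OF lc(3) q(4) ne] q(3) cl by simp
      then have eI: "c @ q \<in> I120 n" using lc q k by (simp add: I120_def inv_seqs_bnd bnd_append)
      have st: "stats (c @ q) = (lv q, zc c, Suc (rm q))" using stats_ct[OF ne cl q(3)] .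
      have ce: "c = butlast c @ [0]" using append_butlast_last_id[OF ne] cl by simp
      have "zpos ?Z (zc (c @ q) - 1) (c @ q) = length (butlast c)"
      proof -
        have e1: "c @ q = butlast c @ 0 # q" using ce by (metis append.assoc append_Cons append_Nil)
        have "zc (c @ q) = Suc (zc (butlast c))" using ce zc_pos0[OF q(3)]
          by (metis zc_simps(1,2,3) add_Suc_right add_0_right)
        then have e2: "zc (c @ q) - 1 = cZ ?Z (butlast c)" by (simp add: zc_cZ)
        show ?thesis unfolding e2 unfolding e1 by (rule zpos_append) simp_all
      qed
      then have "?sp (c @ q) = k" using lc ne k by simp
      then show "c @ q \<in> {e \<in> ?S. ?sp e = k} \<and> length c = k" using eI st Pq lc by simp
    qed
  qed
  finally show ?thesis .
qed



lemma cZ_le1_0: "cZ (\<lambda>x. x \<le> 1) r = 0 \<Longrightarrow> \<forall>y\<in>set r. 1 < y"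
  by (induction r) (auto split: if_split_asm)

lemma map_Suc_pred: "\<forall>y\<in>set r. 0 < y \<Longrightarrow> r = map Suc (map (\<lambda>x. x - 1) r)"
  by (induction r) auto

lemma last_map_Suc: "q \<noteq> [] \<Longrightarrow> last (map Suc q) = Suc (last q)"
  by (simp add: last_map)

lemma g_tail_card:
  assumes n: "1 \<le> n"
  shows "card {f \<in> I120 (Suc n). P (stats f)}
    = (\<Sum>k\<in>{1..n}. card {(g, q) \<in> {g \<in> I120 (Suc k). last g \<le> 1} \<times> Tail k (n - k).
          P (if q = [] then last g else Suc (last q), zc g, Suc (last g) + rm q)})"
proof -
  let ?Z = "\<lambda>x::nat. x \<le> 1"
  let ?S = "{f \<in> I120 (Suc n). P (stats f)}"
  let ?sp = "\<lambda>f. zpos ?Z (cZ ?Z f - 1) f"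
  let ?G = "\<lambda>k. {g \<in> I120 (Suc k). last g \<le> 1}"
  have basic: "length f = Suc n" "bnd 0 f" "av120 f" "f \<noteq> []" "f ! 0 = 0" "2 \<le> cZ ?Z f"
    if "f \<in> I120 (Suc n)" for f
  proof -
    have 1: "length f = Suc n" "bnd 0 f" "av120 f" using that by (auto simp: I120_def inv_seqs_bnd)
    then obtain a b rest where f: "f = a # b # rest" using n
      by (metis Suc_le_length_iff Suc_le_mono numeral_2_eq_2 One_nat_def)
    have ab: "a = 0" "b \<le> 1" using 1(2) f by (auto simp: bnd_Cons)
    show "length f = Suc n" "bnd 0 f" "av120 f" "f \<noteq> []" "f ! 0 = 0" "2 \<le> cZ ?Z f"
      using 1 f ab by auto
  qed
  have "card ?S = (\<Sum>k\<in>{1..n}. card {f \<in> ?S. ?sp f = k})"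
  proof (rule card_partition)
    show "finite ?S" using finite_I120 by simp
    fix f assume "f \<in> ?S"
    then have b: "length f = Suc n" "2 \<le> cZ ?Z f" using basic by auto
    then have lt: "cZ ?Z f - 1 < cZ ?Z f" by simp
    note zp = zpos_props[OF lt]
    have "?sp f \<noteq> 0"
    proof
      assume "?sp f = 0"
      then have "cZ ?Z (take 0 f) = cZ ?Z f - 1" using zp(3) by simp
      then show False using b by simp
    qed
    then show "?sp f \<in> {1..n}" using zp(1) b by simp
  qed simp
  also have "\<dots> = (\<Sum>k\<in>{1..n}. card {(g, q) \<in> ?G k \<times> Tail k (n - k).
          P (if q = [] then last g else Suc (last q), zc g, Suc (last g) + rm q)})"
  proof (rule sum.cong[OF refl])
    fix k assume k: "k \<in> {1..n}"
    let ?T' = "{(g, r) \<in> ?G k \<times> map Suc ` Tail k (n - k). P (if r = [] then last g else last r, zc g, Suc (last g) + rm r)}"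
    let ?T = "{(g, q) \<in> ?G k \<times> Tail k (n - k). P (if q = [] then last g else Suc (last q), zc g, Suc (last g) + rm q)}"
    have "card {f \<in> ?S. ?sp f = k} = card ?T'"
    proof (rule card_split_bij[where j = "Suc k"])
      fix f assume f: "f \<in> {f \<in> ?S. ?sp f = k}"
      then have fI: "f \<in> I120 (Suc n)" and Pf: "P (stats f)" and spk: "?sp f = k" by auto
      note b = basic[OF fI]
      have lt: "cZ ?Z f - 1 < cZ ?Z f" using b by simp
      have kl: "k < length f" and fk: "f ! k \<le> 1" and zt: "cZ ?Z (take k f) = cZ ?Z f - 1"
        using zpos_props[OF lt] spk by auto
      have g_eq: "take (Suc k) f = take k f @ [f ! k]" using kl by (simp add: take_Suc_conv_app_nth)
      have kl': "Suc k \<le> length f" using kl by simp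
      have gI: "take (Suc k) f \<in> I120 (Suc k)"
        using take_drop_bnd[OF b(2) kl'] av120_take[OF b(3)] kl' by (simp add: I120_def inv_seqs_bnd)
      have gl: "last (take (Suc k) f) \<le> 1" using g_eq fk by simp
      have zsum: "cZ ?Z f = cZ ?Z (take (Suc k) f) + cZ ?Z (drop (Suc k) f)"
        by (metis append_take_drop_id cZ_simps(3))
      have "cZ ?Z (take (Suc k) f) = cZ ?Z f" using g_eq zt fk b(6) by simp
      then have "cZ ?Z (drop (Suc k) f) = 0" using zsum by simp
      then have gt1: "\<forall>y\<in>set (drop (Suc k) f). 1 < y" by (rule cZ_le1_0)
      let ?r = "drop (Suc k) f"
      let ?q = "map (\<lambda>x. x - 1) ?r"
      have req: "?r = map Suc ?q" using gt1 by (intro map_Suc_pred) auto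
      have rb: "bnd (Suc k) ?r" "av120 ?r" "length ?r = n - k"
        using take_drop_bnd[OF b(2) kl'] av120_drop[OF b(3)] b(1) by auto
      have "bnd k ?q" using rb(1) unfolding bnd_def by auto
      moreover have "\<forall>y\<in>set ?q. 0 < y" using gt1 by auto
      moreover have "av120 ?q" using rb(2) req av120_map_Suc by metis
      ultimately have qT: "?q \<in> Tail k (n - k)" using rb(3) by (simp add: Tail_def)
      have ne_g: "take (Suc k) f \<noteq> []" using g_eq by simp
      have "take (Suc k) f ! 0 = 0" using b(5) by simp
      then have z_g: "0 \<in> set (take (Suc k) f)" using ne_g by (metis length_greater_0_conv nth_mem)
      have "stats (take (Suc k) f @ ?r) = (if ?r = [] then last (take (Suc k) f) else last ?r,
          zc (take (Suc k) f), Suc (last (take (Suc k) f)) + rm ?r)"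
        by (rule stats_gt[OF ne_g z_g gl gt1])
      then have "stats f = (if ?r = [] then last (take (Suc k) f) else last ?r,
          zc (take (Suc k) f), Suc (last (take (Suc k) f)) + rm ?r)" by simp
      then show "(take (Suc k) f, drop (Suc k) f) \<in> ?T'"
        using gI gl qT req Pf by (auto intro: image_eqI[where x = ?q])
    next
      fix g r assume gr: "(g, r) \<in> ?T'"
      then obtain q where gI: "g \<in> I120 (Suc k)" and gl: "last g \<le> 1" and r: "r = map Suc q"
        and qT: "q \<in> Tail k (n - k)" and Pr: "P (if r = [] then last g else last r, zc g, Suc (last g) + rm r)"
        by auto
      have lg: "length g = Suc k" "bnd 0 g" "av120 g" using gI by (auto simp: I120_def inv_seqs_bnd)
      have ne: "g \<noteq> []" using lg by auto
      have g0: "g ! 0 = 0" using lg(2) ne by (rule bnd0_hd)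
      have z_g: "0 \<in> set g" using g0 ne by (metis length_greater_0_conv nth_mem)
      have q: "length q = n - k" "bnd k q" "\<forall>y\<in>set q. 0 < y" "av120 q" using qT by (auto simp: Tail_def)
      have gt1: "\<forall>y\<in>set r. 1 < y" using q(3) r by auto
      have rb: "bnd (Suc k) r" using q(2) r unfolding bnd_def by auto
      have avr: "av120 r" using q(4) r av120_map_Suc by simp
      have lt: "\<forall>y\<in>set r. last g < y" using gt1 gl by fastforce
      have av: "av120 (g @ r)" by (rule av120_glue[OF lg(3) avr ne lt])
      have fI: "g @ r \<in> I120 (Suc n)" using lg rb av q(1) r k by (simp add: I120_def inv_seqs_bnd bnd_append)
      have st: "stats (g @ r) = (if r = [] then last g else last r, zc g, Suc (last g) + rm r)"
        by (rule stats_gt[OF ne z_g gl gt1])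
      have ge: "g = butlast g @ [last g]" using append_butlast_last_id[OF ne] by simp
      have "?sp (g @ r) = length (butlast g)"
      proof -
        have e1: "g @ r = butlast g @ last g # r" using ge by (metis append.assoc append_Cons append_Nil)
        have "cZ ?Z r = 0" using gt1 by (induction r) auto
        then have "cZ ?Z (g @ r) = Suc (cZ ?Z (butlast g))" using ge gl
          by (metis cZ_simps(1,2,3) add_Suc_right add_0_right)
        then have e2: "cZ ?Z (g @ r) - 1 = cZ ?Z (butlast g)" by simp
        have gl': "last g \<le> 1" by (rule gl)
        show ?thesis unfolding e2 unfolding e1 by (rule zpos_append) (use gl' in simp_all)
      qed
      then have "?sp (g @ r) = k" using lg by simp
      then show "g @ r \<in> {f \<in> ?S. ?sp f = k} \<and> length g = Suc k" using fI st Pr lg by simp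
    qed
    also have "card ?T' = card ?T"
    proof -
      have "?T' = (\<lambda>(g, q). (g, map Suc q)) ` ?T"
      proof (rule set_eqI, rule iffI)
        fix x assume "x \<in> ?T'"
        then obtain g q where x: "x = (g, map Suc q)" "g \<in> ?G k" "q \<in> Tail k (n - k)"
          "P (if map Suc q = [] then last g else last (map Suc q), zc g, Suc (last g) + rm (map Suc q))"
          by auto
        then have "(g, q) \<in> ?T" by (auto simp: rm_map_Suc last_map_Suc split: if_splits)
        then show "x \<in> (\<lambda>(g, q). (g, map Suc q)) ` ?T" using x by force
      next
        fix x assume "x \<in> (\<lambda>(g, q). (g, map Suc q)) ` ?T"
        then obtain g q where x: "x = (g, map Suc q)" "(g, q) \<in> ?T" by auto
        then show "x \<in> ?T'" by (auto simp: rm_map_Suc last_map_Suc split: if_splits)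
      qed
      moreover have "inj_on (\<lambda>(g, q). (g, map Suc q)) ?T"
        by (auto simp: inj_on_def)
      ultimately show ?thesis by (simp add: card_image)
    qed
    finally show "card {f \<in> ?S. ?sp f = k} = card ?T" .
  qed
  finally show ?thesis .
qed



lemma tail_lv: "q \<in> Tail k m \<Longrightarrow> up (lv q) = (if q = [] then 0 else Suc (last q))"
proof (cases "q = []")
  case True then show ?thesis by (simp add: lv_def up_def)
next
  case False
  assume "q \<in> Tail k m"
  then have "0 < last q" using False by (auto simp: Tail_def)
  then show ?thesis using False by (simp add: lv_def up_def)
qed

lemma tail_lv1: "Suc (lv q) = (if q = [] then 1 else Suc (last q))"
  by (auto simp: lv_def)

theorem REC_120: "REC I120"
  unfolding REC_def
proof (intro allI impI)
  fix n l z r :: nat assume n: "n \<ge> 1"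
  let ?T = "\<lambda>k. Tail k (n - k)"
  let ?Y0 = "\<lambda>q. up (lv q) = l \<and> Suc (rm q) = r"
  let ?Y1 = "\<lambda>q. Suc (lv q) = l \<and> Suc (Suc (rm q)) = r"
  let ?A0 = "\<lambda>k. card {q \<in> ?T k. ?Y0 q}"
  let ?A1 = "\<lambda>k. card {q \<in> ?T k. ?Y1 q}"
  let ?C = "\<lambda>k P. card {c \<in> I120 k. last c = 0 \<and> P (zc c)}"
  let ?E0 = "\<lambda>k. card {g \<in> I120 (Suc k). last g = 0 \<and> zc g = z}"
  let ?E1 = "\<lambda>k. card {g \<in> I120 (Suc k). last g = 1 \<and> zc g = z}"
  have L: "card {f \<in> I120 (Suc n). stats f = (l, z, r)} = (\<Sum>k\<in>{1..n}. ?E0 k * ?A0 k + ?E1 k * ?A1 k)"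
  proof -
    have "card {f \<in> I120 (Suc n). stats f = (l, z, r)}
      = (\<Sum>k\<in>{1..n}. card {(g, q) \<in> {g \<in> I120 (Suc k). last g \<le> 1} \<times> Tail k (n - k).
          (if q = [] then last g else Suc (last q), zc g, Suc (last g) + rm q) = (l, z, r)})"
      by (rule g_tail_card[OF n])
    also have "\<dots> = (\<Sum>k\<in>{1..n}. ?E0 k * ?A0 k + ?E1 k * ?A1 k)"
    proof (rule sum.cong[OF refl])
      fix k assume k: "k \<in> {1..n}"
      let ?U0 = "{(g, q) \<in> I120 (Suc k) \<times> ?T k. (last g = 0 \<and> zc g = z) \<and> ?Y0 q}"
      let ?U1 = "{(g, q) \<in> I120 (Suc k) \<times> ?T k. (last g = 1 \<and> zc g = z) \<and> ?Y1 q}"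
      have eq: "{(g, q) \<in> {g \<in> I120 (Suc k). last g \<le> 1} \<times> Tail k (n - k).
          (if q = [] then last g else Suc (last q), zc g, Suc (last g) + rm q) = (l, z, r)} = ?U0 \<union> ?U1"
      proof (rule set_eqI, rule iffI)
        fix x assume "x \<in> {(g, q) \<in> {g \<in> I120 (Suc k). last g \<le> 1} \<times> Tail k (n - k).
          (if q = [] then last g else Suc (last q), zc g, Suc (last g) + rm q) = (l, z, r)}"
        then obtain g q where x: "x = (g, q)" "g \<in> I120 (Suc k)" "last g \<le> 1" "q \<in> ?T k"
          "(if q = [] then last g else Suc (last q), zc g, Suc (last g) + rm q) = (l, z, r)" by auto
        have u: "up (lv q) = (if q = [] then 0 else Suc (last q))" using tail_lv[OF x(4)] .
        show "x \<in> ?U0 \<union> ?U1"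
        proof (cases "last g = 0")
          case True then show ?thesis using x u by auto
        next
          case False then have "last g = 1" using x(3) by simp
          then show ?thesis using x tail_lv1[of q] by auto
        qed
      next
        fix x assume "x \<in> ?U0 \<union> ?U1"
        then obtain g q where x: "x = (g, q)" "g \<in> I120 (Suc k)" "q \<in> ?T k"
          "(last g = 0 \<and> zc g = z \<and> ?Y0 q) \<or> (last g = 1 \<and> zc g = z \<and> ?Y1 q)" by auto
        have u: "up (lv q) = (if q = [] then 0 else Suc (last q))" using tail_lv[OF x(3)] .
        show "x \<in> {(g, q) \<in> {g \<in> I120 (Suc k). last g \<le> 1} \<times> Tail k (n - k).
          (if q = [] then last g else Suc (last q), zc g, Suc (last g) + rm q) = (l, z, r)}"
          using x u tail_lv1[of q] by auto
      qed
      have fin: "finite (I120 (Suc k) \<times> ?T k)" using finite_I120 finite_Tail by simp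
      have f0: "finite ?U0" by (rule finite_subset[OF _ fin]) auto
      have f1: "finite ?U1" by (rule finite_subset[OF _ fin]) auto
      have "card (?U0 \<union> ?U1) = card ?U0 + card ?U1"
        by (rule card_Un_disjoint[OF f0 f1]) auto
      also have "card ?U0 = ?E0 k * ?A0 k" by (rule card_Pair_filter)
      also have "card ?U1 = ?E1 k * ?A1 k" by (rule card_Pair_filter)
      finally show "card {(g, q) \<in> {g \<in> I120 (Suc k). last g \<le> 1} \<times> Tail k (n - k).
          (if q = [] then last g else Suc (last q), zc g, Suc (last g) + rm q) = (l, z, r)}
          = ?E0 k * ?A0 k + ?E1 k * ?A1 k" unfolding eq .
    qed
    finally show ?thesis .
  qed
  have R: "card {e \<in> I120 n. Q (stats e)} = (\<Sum>k\<in>{1..n}. ?C k X * card {q \<in> ?T k. Y q})"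
    if hQ: "\<And>a b c. Q (a, b, c) \<longleftrightarrow> X b \<and> Y' a c" and hY: "\<And>q. Y q \<longleftrightarrow> Y' (lv q) (Suc (rm q))"
    for Q X Y Y'
  proof -
    have "card {e \<in> I120 n. Q (stats e)}
      = (\<Sum>k\<in>{1..n}. card {(c, q) \<in> {c \<in> I120 k. last c = 0} \<times> Tail k (n - k). Q (lv q, zc c, Suc (rm q))})"
      by (rule core_tail_card[OF n])
    also have "\<dots> = (\<Sum>k\<in>{1..n}. ?C k X * card {q \<in> ?T k. Y q})"
    proof (rule sum.cong[OF refl])
      fix k
      have eq: "{(c, q) \<in> {c \<in> I120 k. last c = 0} \<times> Tail k (n - k). Q (lv q, zc c, Suc (rm q))}
          = {(c, q) \<in> I120 k \<times> ?T k. (last c = 0 \<and> X (zc c)) \<and> Y q}"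
        using hQ hY by auto
      show "card {(c, q) \<in> {c \<in> I120 k. last c = 0} \<times> Tail k (n - k). Q (lv q, zc c, Suc (rm q))}
          = ?C k X * card {q \<in> ?T k. Y q}" unfolding eq by (rule card_Pair_filter)
    qed
    finally show ?thesis .
  qed
  have R1: "card {e \<in> I120 n. P1 l z r (stats e)} = (\<Sum>k\<in>{1..n}. ?C k (\<lambda>x. Suc x = z) * ?A0 k)"
    by (rule R[where Y' = "\<lambda>a c. up a = l \<and> c = r"]) (auto simp: P1_def)
  have R2: "card {e \<in> I120 n. P2 l z r (stats e)} = (\<Sum>k\<in>{1..n}. ?C k (\<lambda>x. x = z) * ?A0 k)"
    by (rule R[where Y' = "\<lambda>a c. up a = l \<and> c = r"]) (auto simp: P2_def)
  have R3: "card {e \<in> I120 n. P3 l z r (stats e)} = (\<Sum>k\<in>{1..n}. ?C k (\<lambda>x. x = z) * ?A1 k)"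
    by (rule R[where Y' = "\<lambda>a c. Suc a = l \<and> Suc c = r"]) (auto simp: P3_def)
  have R4: "card {e \<in> I120 n. P4 l z r (stats e)} = (\<Sum>k\<in>{1..n}. ?C k (\<lambda>x. z < x) * ?A1 k)"
    by (rule R[where Y' = "\<lambda>a c. Suc a = l \<and> Suc c = r"]) (auto simp: P4_def)
  have E: "?E0 k * ?A0 k + ?E1 k * ?A1 k
      = ?C k (\<lambda>x. Suc x = z) * ?A0 k + (z - 1) * (?C k (\<lambda>x. x = z) * ?A0 k)
        + ?C k (\<lambda>x. x = z) * ?A1 k + z * (?C k (\<lambda>x. z < x) * ?A1 k)" if k: "k \<in> {1..n}" for k
  proof -
    have "1 \<le> k" using k by simp
    then show ?thesis using I0_120[of k z] I1_120[of k z] by (simp add: algebra_simps)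
  qed
  show "card {f \<in> I120 (Suc n). stats f = (l, z, r)} =
       card {e \<in> I120 n. P1 l z r (stats e)} + (z - 1) * card {e \<in> I120 n. P2 l z r (stats e)}
     + card {e \<in> I120 n. P3 l z r (stats e)} + z * card {e \<in> I120 n. P4 l z r (stats e)}"
    unfolding L R1 R2 R3 R4 using E
    by (simp add: sum.distrib sum_distrib_left)
qed



fun liftz :: "nat list \<Rightarrow> bool list \<Rightarrow> nat list" where
  "liftz [] bs = []"
| "liftz (x # e) bs = (if x = 0 then (if hd bs then 1 else 0) # liftz e (tl bs) else Suc x # liftz e bs)"

fun ots :: "nat \<Rightarrow> nat list \<Rightarrow> bool" where
  "ots x [] = False"
| "ots x (y # ys) = (ots x ys \<or> (y = x \<and> (\<exists>z\<in>set ys. z < x)))"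

fun TF :: "bool list \<Rightarrow> bool" where
  "TF [] = False"
| "TF (b # bs) = (TF bs \<or> (b \<and> False \<in> set bs))"

fun TTF :: "bool list \<Rightarrow> bool" where
  "TTF [] = False"
| "TTF (b # bs) = (TTF bs \<or> (b \<and> TF bs))"

definition cF :: "bool list \<Rightarrow> nat" where "cF bs = length (filter Not bs)"
definition cT :: "bool list \<Rightarrow> nat" where "cT bs = length (filter id bs)"

lemma cF_simps[simp]: "cF [] = 0" "cF (b # bs) = (if b then cF bs else Suc (cF bs))"
  "cF (bs @ cs) = cF bs + cF cs"
  by (auto simp: cF_def)

lemma cT_simps[simp]: "cT [] = 0" "cT (b # bs) = (if b then Suc (cT bs) else cT bs)"
  "cT (bs @ cs) = cT bs + cT cs"
  by (auto simp: cT_def)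

lemma cF_cT: "cF bs + cT bs = length bs"
  by (induction bs) auto

lemma ots_iff: "ots x ys \<longleftrightarrow> (\<exists>j k. j < k \<and> k < length ys \<and> ys ! j = x \<and> ys ! k < x)"
proof (induction ys)
  case Nil then show ?case by simp
next
  case (Cons y ys)
  show ?case
  proof
    assume "ots x (y # ys)"
    then consider "ots x ys" | "y = x" "\<exists>z\<in>set ys. z < x" by auto
    then show "\<exists>j k. j < k \<and> k < length (y # ys) \<and> (y # ys) ! j = x \<and> (y # ys) ! k < x"
    proof cases
      case 1
      then obtain j k where "j < k" "k < length ys" "ys ! j = x" "ys ! k < x" using Cons.IH by blast
      then show ?thesis by (intro exI[of _ "Suc j"] exI[of _ "Suc k"]) simp
    next
      case 2
      then obtain k where "k < length ys" "ys ! k < x" by (auto simp: in_set_conv_nth)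
      then show ?thesis using 2 by (intro exI[of _ 0] exI[of _ "Suc k"]) simp
    qed
  next
    assume "\<exists>j k. j < k \<and> k < length (y # ys) \<and> (y # ys) ! j = x \<and> (y # ys) ! k < x"
    then obtain j k where jk: "j < k" "k < length (y # ys)" "(y # ys) ! j = x" "(y # ys) ! k < x" by blast
    obtain k' where k': "k = Suc k'" using jk by (cases k) auto
    show "ots x (y # ys)"
    proof (cases j)
      case 0
      then have "y = x" "ys ! k' < x" "k' < length ys" using jk k' by auto
      moreover have "ys ! k' \<in> set ys" using \<open>k' < length ys\<close> by (rule nth_mem)
      ultimately show ?thesis by auto
    next
      case (Suc j')
      then have "j' < k'" "k' < length ys" "ys ! j' = x" "ys ! k' < x" using jk k' by auto
      then have "ots x ys" using Cons.IH by blast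
      then show ?thesis by simp
    qed
  qed
qed

lemma av110_Cons: "av110 (x # xs) \<longleftrightarrow> av110 xs \<and> \<not> ots x xs"
proof
  assume h: "av110 (x # xs)"
  have "av110 xs" unfolding av110_def
  proof (intro allI impI)
    fix i j k assume "i < j" "j < k" "k < length xs" "xs ! i = xs ! j"
    then show "xs ! j \<le> xs ! k" using h[unfolded av110_def, rule_format, of "Suc i" "Suc j" "Suc k"] by simp
  qed
  moreover have "\<not> ots x xs"
  proof
    assume "ots x xs"
    then obtain j k where "j < k" "k < length xs" "xs ! j = x" "xs ! k < x" by (auto simp: ots_iff)
    then show False using h[unfolded av110_def, rule_format, of 0 "Suc j" "Suc k"] by simp
  qed
  ultimately show "av110 xs \<and> \<not> ots x xs" by simp
next
  assume h: "av110 xs \<and> \<not> ots x xs"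
  show "av110 (x # xs)" unfolding av110_def
  proof (intro allI impI)
    fix i j k assume ijk: "i < j" "j < k" "k < length (x # xs)" "(x # xs) ! i = (x # xs) ! j"
    obtain j' k' where jk: "j = Suc j'" "k = Suc k'" using ijk by (cases j; cases k) auto
    show "(x # xs) ! j \<le> (x # xs) ! k"
    proof (cases i)
      case 0
      then have "xs ! j' = x" "j' < k'" "k' < length xs" using ijk jk by auto
      then have "\<not> xs ! k' < x" using h by (auto simp: ots_iff)
      then show ?thesis using jk \<open>xs ! j' = x\<close> by simp
    next
      case (Suc i')
      then show ?thesis using h ijk jk unfolding av110_def by auto
    qed
  qed
qed

lemma ots0: "\<not> ots 0 xs"
  by (induction xs) auto

lemma av110_0Cons: "av110 (0 # xs) \<longleftrightarrow> av110 xs"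
  by (simp add: av110_Cons ots0)

lemma length_liftz[simp]: "length (liftz e bs) = length e"
  by (induction e arbitrary: bs) auto

lemma zero_in_liftz: "length bs = zc e \<Longrightarrow> 0 \<in> set (liftz e bs) \<longleftrightarrow> False \<in> set bs"
proof (induction e arbitrary: bs)
  case Nil then show ?case by simp
next
  case (Cons x e)
  show ?case
  proof (cases "x = 0")
    case True
    then obtain b bs' where bs: "bs = b # bs'" using Cons.prems by (cases bs) auto
    then have "length bs' = zc e" using Cons.prems True by simp
    then show ?thesis using Cons.IH[of bs'] True bs by auto
  next
    case False then show ?thesis using Cons by simp
  qed
qed

lemma le1_in_liftz: "length bs = zc e \<Longrightarrow> (\<exists>y\<in>set (liftz e bs). y \<le> 1) \<longleftrightarrow> bs \<noteq> []"
proof (induction e arbitrary: bs)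
  case Nil then show ?case by simp
next
  case (Cons x e)
  show ?case
  proof (cases "x = 0")
    case True
    then obtain b bs' where bs: "bs = b # bs'" using Cons.prems by (cases bs) auto
    then show ?thesis using True by auto
  next
    case False then show ?thesis using Cons by simp
  qed
qed

lemma lt_lift: "0 < x \<Longrightarrow> length bs = zc e \<Longrightarrow> (\<exists>z\<in>set (liftz e bs). z < Suc x) \<longleftrightarrow> (\<exists>z\<in>set e. z < x)"
proof (induction e arbitrary: bs)
  case Nil then show ?case by simp
next
  case (Cons y e)
  show ?case
  proof (cases "y = 0")
    case True
    then obtain b bs' where bs: "bs = b # bs'" using Cons.prems by (cases bs) auto
    then show ?thesis using True Cons.prems by auto
  next
    case False then show ?thesis using Cons by auto
  qed
qed

lemma gt_lift: "0 < x \<Longrightarrow> length bs = zc e \<Longrightarrow> (\<forall>z\<in>set (liftz e bs). Suc x < z) \<longleftrightarrow> (\<forall>z\<in>set e. x < z)"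
proof (induction e arbitrary: bs)
  case Nil then show ?case by simp
next
  case (Cons y e)
  show ?case
  proof (cases "y = 0")
    case True
    then obtain b bs' where bs: "bs = b # bs'" using Cons.prems by (cases bs) auto
    then show ?thesis using True Cons.prems by auto
  next
    case False then show ?thesis using Cons by auto
  qed
qed

lemma ots1_lift: "length bs = zc e \<Longrightarrow> ots 1 (liftz e bs) \<longleftrightarrow> TF bs"
proof (induction e arbitrary: bs)
  case Nil then show ?case by simp
next
  case (Cons x e)
  show ?case
  proof (cases "x = 0")
    case True
    then obtain b bs' where bs: "bs = b # bs'" using Cons.prems by (cases bs) auto
    then have l: "length bs' = zc e" using Cons.prems True by simp
    have "(\<exists>z\<in>set (liftz e bs'). z < 1) \<longleftrightarrow> False \<in> set bs'"
      using zero_in_liftz[OF l] by auto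
    then show ?thesis using Cons.IH[OF l] True bs by auto
  next
    case False then show ?thesis using Cons by simp
  qed
qed

lemma otsS_lift: "0 < x \<Longrightarrow> length bs = zc e \<Longrightarrow> ots (Suc x) (liftz e bs) \<longleftrightarrow> ots x e"
proof (induction e arbitrary: bs)
  case Nil then show ?case by simp
next
  case (Cons y e)
  show ?case
  proof (cases "y = 0")
    case True
    then obtain b bs' where bs: "bs = b # bs'" using Cons.prems by (cases bs) auto
    then have l: "length bs' = zc e" using Cons.prems True by simp
    then show ?thesis using Cons.IH[OF Cons.prems(1) l] True bs Cons.prems(1) by auto
  next
    case False
    then have l: "length bs = zc e" using Cons.prems by simp
    then show ?thesis using Cons.IH[OF Cons.prems(1) l] False lt_lift[OF Cons.prems(1) l] by auto
  qed
qed

lemma av110_lift: "length bs = zc e \<Longrightarrow> av110 (liftz e bs) \<longleftrightarrow> av110 e \<and> \<not> TTF bs"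
proof (induction e arbitrary: bs)
  case Nil then show ?case by (simp add: av110_def)
next
  case (Cons x e)
  show ?case
  proof (cases "x = 0")
    case True
    then obtain b bs' where bs: "bs = b # bs'" using Cons.prems by (cases bs) auto
    then have l: "length bs' = zc e" using Cons.prems True by simp
    show ?thesis
    proof (cases b)
      case True
      then show ?thesis using Cons.IH[OF l] \<open>x = 0\<close> bs ots1_lift[OF l] by (auto simp: av110_Cons ots0)
    next
      case False
      then show ?thesis using Cons.IH[OF l] \<open>x = 0\<close> bs by (auto simp: av110_Cons ots0)
    qed
  next
    case False
    then have l: "length bs = zc e" using Cons.prems by simp
    then show ?thesis using Cons.IH[OF l] False otsS_lift[of x bs e] by (auto simp: av110_Cons)
  qed
qed

lemma bnd_lift: "length bs = zc e \<Longrightarrow> bnd (Suc k) (liftz e bs) \<longleftrightarrow> bnd k e"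
proof (induction e arbitrary: bs k)
  case Nil then show ?case by simp
next
  case (Cons x e)
  show ?case
  proof (cases "x = 0")
    case True
    then obtain b bs' where bs: "bs = b # bs'" using Cons.prems by (cases bs) auto
    then have l: "length bs' = zc e" using Cons.prems True by simp
    then show ?thesis using Cons.IH[OF l, of "Suc k"] True bs by (simp add: bnd_Cons)
  next
    case False
    then have l: "length bs = zc e" using Cons.prems by simp
    then show ?thesis using Cons.IH[OF l, of "Suc k"] False by (simp add: bnd_Cons)
  qed
qed

lemma pred_lift: "map (\<lambda>x. x - 1) (liftz e bs) = e"
  by (induction e arbitrary: bs) auto

lemma bits_lift: "length bs = zc e \<Longrightarrow> map (\<lambda>x. x = 1) (filter (\<lambda>x. x \<le> 1) (liftz e bs)) = bs"
proof (induction e arbitrary: bs)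
  case Nil then show ?case by simp
next
  case (Cons x e)
  show ?case
  proof (cases "x = 0")
    case True
    then obtain b bs' where bs: "bs = b # bs'" using Cons.prems by (cases bs) auto
    then have l: "length bs' = zc e" using Cons.prems True by simp
    then show ?thesis using Cons.IH[OF l] True bs by auto
  next
    case False
    then show ?thesis using Cons by simp
  qed
qed

lemma lift_unlift: "liftz (map (\<lambda>x. x - 1) L) (map (\<lambda>x. x = 1) (filter (\<lambda>x. x \<le> 1) L)) = L"
  by (induction L) auto

lemma zc_unlift: "zc (map (\<lambda>x. x - 1) L) = length (filter (\<lambda>x. x \<le> 1) L)"
  by (induction L) auto

lemma zc_lift: "length bs = zc e \<Longrightarrow> zc (liftz e bs) = cF bs"
proof (induction e arbitrary: bs)
  case Nil then show ?case by simp
next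
  case (Cons x e)
  show ?case
  proof (cases "x = 0")
    case True
    then obtain b bs' where bs: "bs = b # bs'" using Cons.prems by (cases bs) auto
    then have l: "length bs' = zc e" using Cons.prems True by simp
    then show ?thesis using Cons.IH[OF l] True bs by auto
  next
    case False
    then show ?thesis using Cons by simp
  qed
qed

lemma all_gt1: "(\<forall>y\<in>set xs. 1 < (y::nat)) \<longleftrightarrow> \<not> (\<exists>y\<in>set xs. y \<le> 1)"
  by (induction xs) auto

lemma notin0_pos: "(\<forall>y\<in>set xs. 0 < (y::nat)) \<longleftrightarrow> 0 \<notin> set xs"
  by (induction xs) auto

lemma zc_pos_iff: "0 < zc e \<longleftrightarrow> 0 \<in> set e"
  by (induction e) auto

lemma last_lift: "e \<noteq> [] \<Longrightarrow> length bs = zc e \<Longrightarrow>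
    last (liftz e bs) = (if last e = 0 then (if last bs then 1 else 0) else Suc (last e))"
proof (induction e arbitrary: bs)
  case Nil then show ?case by simp
next
  case (Cons x e)
  show ?case
  proof (cases "x = 0")
    case True
    then obtain b bs' where bs: "bs = b # bs'" using Cons.prems by (cases bs) auto
    then have l: "length bs' = zc e" using Cons.prems True by simp
    show ?thesis
    proof (cases "e = []")
      case True then show ?thesis using bs l \<open>x = 0\<close> by simp
    next
      case False
      have "bs' \<noteq> []" if "last e = 0"
      proof -
        have "0 \<in> set e" using that False by (metis last_in_set)
        then have "0 < zc e" by (simp add: zc_pos_iff)
        then show ?thesis using l by auto
      qed
      have ne: "liftz e bs' \<noteq> []" using False by (metis length_liftz length_0_conv)
      then show ?thesis using Cons.IH[OF False l] False \<open>x = 0\<close> bs \<open>last e = 0 \<Longrightarrow> bs' \<noteq> []\<close> by auto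
    qed
  next
    case False
    then have l: "length bs = zc e" using Cons.prems by simp
    show ?thesis
    proof (cases "e = []")
      case True then show ?thesis using False by simp
    next
      case ne: False
      have "liftz e bs \<noteq> []" using ne by (metis length_liftz length_0_conv)
      then show ?thesis using Cons.IH[OF ne l] False ne by simp
    qed
  qed
qed

lemma rm_lift: "length bs = zc e \<Longrightarrow>
    rm (liftz e bs) + (if 0 \<in> set e then 1 else 0)
    = rm e + (if False \<in> set bs then 1 else 0) + (if bs \<noteq> [] \<and> last bs then 1 else 0)"
proof (induction e arbitrary: bs)
  case Nil then show ?case by simp
next
  case (Cons x e)
  show ?case
  proof (cases "x = 0")
    case True
    then obtain b bs' where bs: "bs = b # bs'" using Cons.prems by (cases bs) auto
    then have l: "length bs' = zc e" using Cons.prems True by simp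
    note IH = Cons.IH[OF l]
    have e0: "0 \<in> set e \<longleftrightarrow> bs' \<noteq> []" using l zc_pos_iff[of e] by auto
    have z0: "0 \<in> set (liftz e bs') \<longleftrightarrow> False \<in> set bs'" by (rule zero_in_liftz[OF l])
    have le1: "(\<exists>y\<in>set (liftz e bs'). y \<le> 1) \<longleftrightarrow> bs' \<noteq> []" by (rule le1_in_liftz[OF l])
    have A: "(\<forall>y\<in>set (liftz e bs'). 0 < y) \<longleftrightarrow> False \<notin> set bs'" using z0 notin0_pos by simp
    have B: "(\<forall>y\<in>set (liftz e bs'). 1 < y) \<longleftrightarrow> bs' = []" unfolding all_gt1 using le1 by blast
    have C: "(\<forall>y\<in>set e. 0 < y) \<longleftrightarrow> bs' = []" using e0 notin0_pos[of e] by blast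
    have lb: "bs' \<noteq> [] \<Longrightarrow> last (b # bs') = last bs'" by simp
    show ?thesis
    proof (cases b)
      case True
      show ?thesis using IH True \<open>x = 0\<close> bs A B C lb e0 by (cases "bs' = []") (auto simp: rm_Cons)
    next
      case False
      show ?thesis using IH False \<open>x = 0\<close> bs A B C lb e0 by (cases "bs' = []") (auto simp: rm_Cons)
    qed
  next
    case False
    then have l: "length bs = zc e" using Cons.prems by simp
    have "x > 0" using False by simp
    then show ?thesis using Cons.IH[OF l] False gt_lift[OF \<open>x > 0\<close> l] by (simp add: rm_Cons)
  qed
qed

lemma rm_lift0: "length bs = zc e \<Longrightarrow> 0 \<in> set e \<Longrightarrow> rm (0 # liftz e bs) = rm e + (if last bs then 1 else 0)"
proof -
  assume l: "length bs = zc e" and z: "0 \<in> set e"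
  have ne: "bs \<noteq> []" using l z zc_pos_iff[of e] by auto
  have "(\<forall>y\<in>set (liftz e bs). 0 < y) \<longleftrightarrow> False \<notin> set bs" using zero_in_liftz[OF l] notin0_pos by simp
  then show ?thesis using rm_lift[OF l] z ne by (auto simp: rm_Cons)
qed



definition V :: "nat \<Rightarrow> bool list set" where "V Z = {bs. length bs = Z \<and> \<not> TTF bs}"

lemma finite_V: "finite (V Z)"
proof -
  have "V Z \<subseteq> {bs. set bs \<subseteq> UNIV \<and> length bs = Z}" by (auto simp: V_def)
  moreover have "finite {bs :: bool list. set bs \<subseteq> UNIV \<and> length bs = Z}"
    by (rule finite_lists_length_eq) simp
  ultimately show ?thesis by (rule finite_subset)
qed

lemma cT_pos: "True \<in> set bs \<longleftrightarrow> 0 < cT bs"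
  by (induction bs) auto

lemma TF_snoc: "TF (bs @ [b]) \<longleftrightarrow> TF bs \<or> (\<not> b \<and> True \<in> set bs)"
  by (induction bs) auto

lemma TTF_snoc: "TTF (bs @ [b]) \<longleftrightarrow> TTF bs \<or> (\<not> b \<and> 2 \<le> cT bs)"
proof (induction bs)
  case Nil then show ?case by simp
next
  case (Cons x bs)
  have "TTF ((x # bs) @ [b]) \<longleftrightarrow> TTF (bs @ [b]) \<or> (x \<and> TF (bs @ [b]))" by simp
  also have "\<dots> \<longleftrightarrow> (TTF bs \<or> (\<not> b \<and> 2 \<le> cT bs)) \<or> (x \<and> (TF bs \<or> (\<not> b \<and> True \<in> set bs)))"
    using Cons.IH TF_snoc by simp
  also have "\<dots> \<longleftrightarrow> TTF (x # bs) \<or> (\<not> b \<and> 2 \<le> cT (x # bs))"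
    using cT_pos[of bs] by auto
  finally show ?case .
qed

definition A :: "nat \<Rightarrow> nat \<Rightarrow> nat" where "A Z c = card {bs \<in> V Z. cF bs = c}"

lemma V_snoc:
  "{bs \<in> V (Suc Z). last bs = b \<and> P (cF bs)}
   = (\<lambda>bs. bs @ [b]) ` {bs \<in> V Z. (b \<or> cT bs \<le> 1) \<and> P (cF bs + (if b then 0 else 1))}"
proof (rule set_eqI, rule iffI)
  fix bs assume h: "bs \<in> {bs \<in> V (Suc Z). last bs = b \<and> P (cF bs)}"
  then have ne: "bs \<noteq> []" by (auto simp: V_def)
  have e: "bs = butlast bs @ [b]" using h append_butlast_last_id[OF ne] by simp
  have "length (butlast bs) = Z" using h by (simp add: V_def)
  moreover have "\<not> TTF (butlast bs @ [b])" using h e by (simp add: V_def)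
  then have "\<not> TTF (butlast bs)" "b \<or> cT (butlast bs) \<le> 1" by (auto simp: TTF_snoc)
  moreover have "cF bs = cF (butlast bs) + (if b then 0 else 1)" by (subst e) simp
  then have "P (cF (butlast bs) + (if b then 0 else 1))" using h by simp
  ultimately have "butlast bs \<in> {bs \<in> V Z. (b \<or> cT bs \<le> 1) \<and> P (cF bs + (if b then 0 else 1))}"
    by (simp add: V_def)
  then show "bs \<in> (\<lambda>bs. bs @ [b]) ` {bs \<in> V Z. (b \<or> cT bs \<le> 1) \<and> P (cF bs + (if b then 0 else 1))}"
    using e by (rule rev_image_eqI)
next
  fix bs assume "bs \<in> (\<lambda>bs. bs @ [b]) ` {bs \<in> V Z. (b \<or> cT bs \<le> 1) \<and> P (cF bs + (if b then 0 else 1))}"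
  then obtain bs0 where "bs = bs0 @ [b]" "length bs0 = Z" "\<not> TTF bs0" "b \<or> cT bs0 \<le> 1"
    "P (cF bs0 + (if b then 0 else 1))" by (auto simp: V_def)
  then show "bs \<in> {bs \<in> V (Suc Z). last bs = b \<and> P (cF bs)}" by (auto simp: V_def TTF_snoc)
qed

lemma card_snoc_img: "card ((\<lambda>bs. bs @ [b]) ` S) = card S"
  by (rule card_image) (simp add: inj_on_def)

lemma A_0: "A 0 c = (if c = 0 then 1 else 0)"
proof -
  have "{bs \<in> V 0. cF bs = c} = (if c = 0 then {[]} else {})" by (auto simp: V_def)
  then show ?thesis by (simp add: A_def)
qed

lemma cT_eq: "length bs = Z \<Longrightarrow> cT bs = Z - cF bs"
  using cF_cT[of bs] by simp

lemma A_Suc: "A (Suc Z) c = A Z c + (if 1 \<le> c \<and> Z \<le> c then A Z (c - 1) else 0)"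
proof -
  have split: "{bs \<in> V (Suc Z). cF bs = c} = {bs \<in> V (Suc Z). last bs = True \<and> cF bs = c} \<union> {bs \<in> V (Suc Z). last bs = False \<and> cF bs = c}"
    by auto
  have fin: "finite {bs \<in> V (Suc Z). P bs}" for P using finite_V by simp
  have "A (Suc Z) c = card {bs \<in> V (Suc Z). last bs = True \<and> cF bs = c} + card {bs \<in> V (Suc Z). last bs = False \<and> cF bs = c}"
    unfolding A_def split by (rule card_Un_disjoint) (use fin in auto)
  also have "card {bs \<in> V (Suc Z). last bs = True \<and> cF bs = c} = A Z c"
    unfolding V_snoc[of Z True "\<lambda>x. x = c"] card_snoc_img A_def by simp
  also have "card {bs \<in> V (Suc Z). last bs = False \<and> cF bs = c} = (if 1 \<le> c \<and> Z \<le> c then A Z (c - 1) else 0)"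
  proof -
    have "card {bs \<in> V (Suc Z). last bs = False \<and> cF bs = c} = card {bs \<in> V Z. cT bs \<le> 1 \<and> cF bs + 1 = c}"
      unfolding V_snoc[of Z False "\<lambda>x. x = c"] card_snoc_img by simp
    also have "{bs \<in> V Z. cT bs \<le> 1 \<and> cF bs + 1 = c} = (if 1 \<le> c \<and> Z \<le> c then {bs \<in> V Z. cF bs = c - 1} else {})"
      by (auto simp: V_def cT_eq)
    finally show ?thesis by (simp add: A_def)
  qed
  finally show ?thesis .
qed

lemma A_formula: "A Z c = (if c = Z then 1 else if Suc c = Z then Z else if c + 2 \<le> Z then Suc c else 0)"
proof (induction Z arbitrary: c)
  case 0 then show ?case by (simp add: A_0)
next
  case (Suc Z)
  show ?case
  proof (cases "c = 0")
    case True
    then show ?thesis unfolding A_Suc using Suc.IH by auto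
  next
    case False
    then show ?thesis unfolding A_Suc using Suc.IH[of c] Suc.IH[of "c - 1"] by auto
  qed
qed

lemma fib_last: "card {bs \<in> V (Suc Z0). last bs = True \<and> Suc (cF bs) = z}
    = (if z = Suc Z0 then 1 else if 1 \<le> z \<and> z < Suc Z0 then z else 0)"
proof -
  have "card {bs \<in> V (Suc Z0). last bs = True \<and> Suc (cF bs) = z} = card {bs \<in> V Z0. Suc (cF bs) = z}"
    unfolding V_snoc[of Z0 True "\<lambda>x. Suc x = z"] card_snoc_img by simp
  also have "\<dots> = (if 1 \<le> z then A Z0 (z - 1) else 0)"
  proof (cases z)
    case 0 then show ?thesis by simp
  next
    case (Suc z') then show ?thesis by (simp add: A_def)
  qed
  finally show ?thesis by (auto simp: A_formula)
qed

lemma fib_nlast: "card {bs \<in> V (Suc Z0). last bs = False \<and> Suc (cF bs) = z}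
    = (if z = Suc (Suc Z0) then 1 else if z = Suc Z0 then z - 1 else 0)"
proof -
  have "card {bs \<in> V (Suc Z0). last bs = False \<and> Suc (cF bs) = z} = card {bs \<in> V Z0. cT bs \<le> 1 \<and> Suc (cF bs + 1) = z}"
    unfolding V_snoc[of Z0 False "\<lambda>x. Suc x = z"] card_snoc_img by simp
  also have "{bs \<in> V Z0. cT bs \<le> 1 \<and> Suc (cF bs + 1) = z} = (if 2 \<le> z \<and> Z0 \<le> z - 1 then {bs \<in> V Z0. cF bs = z - 2} else {})"
    by (auto simp: V_def cT_eq)
  also have "card \<dots> = (if 2 \<le> z \<and> Z0 \<le> z - 1 then A Z0 (z - 2) else 0)" by (simp add: A_def)
  finally show ?thesis by (auto simp: A_formula)
qed



abbreviation pi :: "nat list \<Rightarrow> nat list" where "pi f \<equiv> map (\<lambda>x. x - 1) (tl f)"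
abbreviation bits :: "nat list \<Rightarrow> bool list" where "bits f \<equiv> map (\<lambda>x. x = 1) (filter (\<lambda>x. x \<le> 1) (tl f))"

lemma bnd0_hd': "bnd 0 h \<Longrightarrow> h \<noteq> [] \<Longrightarrow> h ! 0 = 0"
  unfolding bnd_def by auto

lemma inv_seqs_bnd': "h \<in> inv_seqs k \<longleftrightarrow> length h = k \<and> bnd 0 h"
  by (simp add: inv_seqs_alt)

lemma unlift_mem:
  assumes f: "f \<in> I110 (Suc n)"
  shows "f = 0 # liftz (pi f) (bits f)" "pi f \<in> I110 n" "bits f \<in> V (zc (pi f))"
proof -
  obtain x0 L where fL: "f = x0 # L" using f by (cases f) (auto simp: I110_def inv_seqs_bnd')
  have x0: "x0 = 0" using f fL by (auto simp: I110_def inv_seqs_bnd' bnd_Cons)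
  have Ll: "liftz (pi f) (bits f) = L" using fL lift_unlift by simp
  have len: "length (bits f) = zc (pi f)" using fL zc_unlift by simp
  show "f = 0 # liftz (pi f) (bits f)" using fL x0 Ll by simp
  have avf: "av110 f" "bnd 0 f" "length f = Suc n" using f by (auto simp: I110_def inv_seqs_bnd')
  have "av110 L" using avf fL x0 av110_0Cons by simp
  then have a: "av110 (pi f) \<and> \<not> TTF (bits f)" using av110_lift[OF len] Ll by simp
  have "bnd 1 L" using avf fL by (simp add: bnd_Cons)
  then have "bnd 0 (pi f)" using bnd_lift[OF len, of 0] Ll by simp
  moreover have "length (pi f) = n" using avf fL by simp
  ultimately show "pi f \<in> I110 n" using a by (simp add: I110_def inv_seqs_bnd')
  show "bits f \<in> V (zc (pi f))" using a len by (simp add: V_def)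
qed

lemma lift_mem:
  assumes e: "e \<in> I110 n" and bs: "bs \<in> V (zc e)"
  shows "0 # liftz e bs \<in> I110 (Suc n)" "pi (0 # liftz e bs) = e" "bits (0 # liftz e bs) = bs"
proof -
  have len: "length bs = zc e" "\<not> TTF bs" using bs by (auto simp: V_def)
  have ee: "av110 e" "bnd 0 e" "length e = n" using e by (auto simp: I110_def inv_seqs_bnd')
  have "av110 (0 # liftz e bs)" using av110_0Cons av110_lift[OF len(1)] ee len by simp
  moreover have "bnd 0 (0 # liftz e bs)" using bnd_lift[OF len(1), of 0] ee by (simp add: bnd_Cons)
  ultimately show "0 # liftz e bs \<in> I110 (Suc n)" using ee by (simp add: I110_def inv_seqs_bnd')
  show "pi (0 # liftz e bs) = e" using pred_lift[of e bs] by simp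
  show "bits (0 # liftz e bs) = bs" using bits_lift[OF len(1)] by simp
qed

lemma stats_lift:
  assumes e: "e \<in> I110 n" and n: "1 \<le> n" and bs: "bs \<in> V (zc e)"
  shows "stats (0 # liftz e bs) = (if last bs then (Suc (last e), Suc (cF bs), Suc (rm e))
          else (up (last e), Suc (cF bs), rm e))"
proof -
  have len: "length bs = zc e" using bs by (simp add: V_def)
  have ee: "bnd 0 e" "length e = n" using e by (auto simp: I110_def inv_seqs_bnd')
  have ne: "e \<noteq> []" using ee n by auto
  have z: "0 \<in> set e" using bnd0_hd'[OF ee(1) ne] ne by (metis length_greater_0_conv nth_mem)
  have neL: "liftz e bs \<noteq> []" using ne by (metis length_liftz length_0_conv)
  have l: "last (0 # liftz e bs) = (if last e = 0 then (if last bs then 1 else 0) else Suc (last e))"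
    using last_lift[OF ne len] neL by simp
  have zz: "zc (0 # liftz e bs) = Suc (cF bs)" using zc_lift[OF len] by simp
  have rr: "rm (0 # liftz e bs) = rm e + (if last bs then 1 else 0)" by (rule rm_lift0[OF len z])
  show ?thesis unfolding stats_def using l zz rr by (auto simp: up_def)
qed



lemma sum_ind_card: "finite X \<Longrightarrow> (\<Sum>e\<in>X. if P e then 1 else 0) = card {e \<in> X. P e}"
  by (simp add: sum.If_cases Int_def)

theorem REC_110: "REC I110"
  unfolding REC_def
proof (intro allI impI)
  fix n l z r :: nat assume n: "n \<ge> 1"
  let ?S = "{f \<in> I110 (Suc n). stats f = (l, z, r)}"
  let ?c = "\<lambda>e. (if P1 l z r (stats e) then 1 else 0) + (z - 1) * (if P2 l z r (stats e) then 1 else 0)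
      + (if P3 l z r (stats e) then 1 else 0) + z * (if P4 l z r (stats e) then (1::nat) else 0)"
  have part: "card ?S = (\<Sum>e\<in>I110 n. card {f \<in> ?S. pi f = e})"
  proof (rule card_partition)
    show "finite ?S" using finite_I110 by simp
    show "finite (I110 n)" by (rule finite_I110)
    fix f assume "f \<in> ?S"
    then show "pi f \<in> I110 n" using unlift_mem(2) by blast
  qed
  have fib: "card {f \<in> ?S. pi f = e} = ?c e" if e: "e \<in> I110 n" for e
  proof -
    let ?B = "{bs \<in> V (zc e). stats (0 # liftz e bs) = (l, z, r)}"
    have img: "{f \<in> ?S. pi f = e} = (\<lambda>bs. 0 # liftz e bs) ` ?B"
    proof (rule set_eqI, rule iffI)
      fix f assume f: "f \<in> {f \<in> ?S. pi f = e}"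
      then have fI: "f \<in> I110 (Suc n)" and pe: "pi f = e" and st: "stats f = (l, z, r)" by auto
      note u = unlift_mem[OF fI]
      have fe: "f = 0 # liftz e (bits f)" using u(1) pe by simp
      have "bits f \<in> V (zc e)" using u(3) pe by simp
      moreover have "stats (0 # liftz e (bits f)) = (l, z, r)" using st fe by simp
      ultimately have "bits f \<in> ?B" by simp
      then show "f \<in> (\<lambda>bs. 0 # liftz e bs) ` ?B" using fe by (rule rev_image_eqI)
    next
      fix f assume "f \<in> (\<lambda>bs. 0 # liftz e bs) ` ?B"
      then obtain bs where bs: "f = 0 # liftz e bs" "bs \<in> V (zc e)" "stats (0 # liftz e bs) = (l, z, r)" by auto
      then show "f \<in> {f \<in> ?S. pi f = e}" using lift_mem[OF e bs(2)] by simp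
    qed
    have inj: "inj_on (\<lambda>bs. 0 # liftz e bs) ?B"
    proof (rule inj_onI)
      fix x y assume "x \<in> ?B" "y \<in> ?B" "0 # liftz e x = 0 # liftz e y"
      then have "x \<in> V (zc e)" "y \<in> V (zc e)" "0 # liftz e x = 0 # liftz e y" by auto
      then show "x = y" using lift_mem(3)[OF e, of x] lift_mem(3)[OF e, of y] by simp
    qed
    have c1: "card {f \<in> ?S. pi f = e} = card ?B" unfolding img by (rule card_image[OF inj])
    have ee: "bnd 0 e" "length e = n" using e by (auto simp: I110_def inv_seqs_bnd')
    have ne: "e \<noteq> []" using ee n by auto
    have "0 \<in> set e" using bnd0_hd'[OF ee(1) ne] ne by (metis length_greater_0_conv nth_mem)
    then have "0 < zc e" by (simp add: zc_pos_iff)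
    then obtain Z0 where Z: "zc e = Suc Z0" by (cases "zc e") auto
    let ?T = "{bs \<in> V (zc e). last bs = True \<and> Suc (cF bs) = z}"
    let ?F = "{bs \<in> V (zc e). last bs = False \<and> Suc (cF bs) = z}"
    have Beq: "?B = (if Suc (last e) = l \<and> Suc (rm e) = r then ?T else {}) \<union> (if up (last e) = l \<and> rm e = r then ?F else {})"
      using stats_lift[OF e n] by (auto split: if_splits)
    have fT: "finite ?T" "finite ?F" using finite_V by auto
    have "card ?B = (if Suc (last e) = l \<and> Suc (rm e) = r then card ?T else 0) + (if up (last e) = l \<and> rm e = r then card ?F else 0)"
      unfolding Beq by (subst card_Un_disjoint) (use fT in auto)
    also have "\<dots> = ?c e"
      unfolding Z fib_last fib_nlast
      by (auto simp: stats_def P1_def P2_def P3_def P4_def Z)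
    finally show ?thesis using c1 by simp
  qed
  have "card ?S = (\<Sum>e\<in>I110 n. ?c e)" using part fib by simp
  also have "\<dots> = card {e \<in> I110 n. P1 l z r (stats e)} + (z - 1) * card {e \<in> I110 n. P2 l z r (stats e)}
     + card {e \<in> I110 n. P3 l z r (stats e)} + z * card {e \<in> I110 n. P4 l z r (stats e)}"
    by (simp add: sum.distrib sum_distrib_left[symmetric] sum_ind_card finite_I110)
  finally show "card ?S = card {e \<in> I110 n. P1 l z r (stats e)} + (z - 1) * card {e \<in> I110 n. P2 l z r (stats e)}
     + card {e \<in> I110 n. P3 l z r (stats e)} + z * card {e \<in> I110 n. P4 l z r (stats e)}" .
qed



theorem proposition3p1:
  fixes n a b c :: nat
  assumes "n \<ge> 1"
  shows "card {e \<in> I_vinc120 n. last_stat e = a \<and> zero_stat e = b \<and> rmin_stat e = c}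
       = card {e \<in> I_110 n. last_stat e = a \<and> zero_stat e = b \<and> rmin_stat e = c}"
  by (rule main_from_REC[OF REC_120 REC_110 assms])

end
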